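(* Let $(Q,Sp,I)$ be a skew-gentle triple. Then there is an isomorphism of $k$-vector spaces $kQ^{sp}/\langle I^{sg}\rangle\cong kQ^{sp}/\langle I^{sp}\rangle$. In particular $kQ^{sp}/\langle I^{sg}\rangle$ is finite dimensional if and only if $kQ^{sp}/\langle I^{sp}\rangle$ is finite dimensional.
   Context: $k$ is an algebraically closed field; quivers are finite and paths are composed right to left. A pair $(Q,I)$ with $I$ a set of paths of $Q$ is a gentle pair if: (G1) each vertex is the start of at most two arrows and the target of at most two arrows; (G2) every path in $I$ has length $2$; (G3) for each arrow $\alpha$ there is at most one arrow $\beta$ with $\beta\alpha\in I$ and at most one arrow $\gamma$ with $\gamma\alpha$ a path not in $I$; (G4) for each arrow $\alpha$ there is at most one arrow $\beta$ with $\alpha\beta\in I$ and at most one arrow $\gamma$ with $\alpha\gamma$ a path not in $I$. A triple $(Q,Sp,I)$ with $Q$ a quiver, $Sp\subseteq Q_0$ and $I$ a set of paths in $Q$ is skew-gentle if $(Q^{sp},I^{sp})$ is a gentle pair, where $Q^{sp}$ has vertices $Q_0$ and arrows $Q_1\cup\{\epsilon_i\mid i\in Sp\}$ with $\epsilon_i$ a new loop at $i$ (special loops), and $I^{sp}=I\cup\{\epsilon_i^2\mid i\in Sp\}$. Set $I^{sg}=I\cup\{\epsilon_i^2-\epsilon_i\mid i\in Sp\}$; $\langle X\rangle$ denotes the ideal of $kQ^{sp}$ generated by $X$. *)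

theory Defs
  imports "HOL-Computational_Algebra.Polynomial"
begin

definition alg_closed :: "'k::field itself \<Rightarrow> bool" where
  "alg_closed _ = (\<forall>p :: 'k poly. degree p > 0 \<longrightarrow> (\<exists>x. poly p x = 0))"

text \<open>A path is a triple (u, xs, w): start vertex u, arrows xs written in composition order
  (paths compose right to left, so xs = [a_n, ..., a_1] means a_n ... a_1, a_1 first),
  end vertex w.\<close>

type_synonym ('v,'b) path = "'v \<times> 'b list \<times> 'v"

definition valid_path :: "'v set \<Rightarrow> 'b set \<Rightarrow> ('b \<Rightarrow> 'v) \<Rightarrow> ('b \<Rightarrow> 'v) \<Rightarrow> ('v,'b) path \<Rightarrow> bool" where
  "valid_path V A s t p = (case p of (u, xs, w) \<Rightarrow>
     u \<in> V \<and> w \<in> V \<and> set xs \<subseteq> A \<and>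
     (if xs = [] then u = w
      else s (last xs) = u \<and> t (hd xs) = w \<and>
           (\<forall>i. Suc i < length xs \<longrightarrow> s (xs ! i) = t (xs ! Suc i))))"

definition pstart :: "('v,'b) path \<Rightarrow> 'v" where "pstart p = fst p"
definition parrs :: "('v,'b) path \<Rightarrow> 'b list" where "parrs p = fst (snd p)"
definition pend :: "('v,'b) path \<Rightarrow> 'v" where "pend p = snd (snd p)"

text \<open>Composition p q (first q, then p), meaningful when pend q = pstart p.\<close>
definition pcomp :: "('v,'b) path \<Rightarrow> ('v,'b) path \<Rightarrow> ('v,'b) path" where
  "pcomp p q = (pstart q, parrs p @ parrs q, pend p)"

text \<open>Elements of kQ: finitely supported k-valued functions on the paths of Q.\<close>
definition path_alg :: "'v set \<Rightarrow> 'b set \<Rightarrow> ('b \<Rightarrow> 'v) \<Rightarrow> ('b \<Rightarrow> 'v) \<Rightarrow> (('v,'b) path \<Rightarrow> 'k::field) set" where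
  "path_alg V A s t = {f. finite {p. f p \<noteq> 0} \<and> (\<forall>p. f p \<noteq> 0 \<longrightarrow> valid_path V A s t p)}"

definition vadd :: "('x \<Rightarrow> 'k::field) \<Rightarrow> ('x \<Rightarrow> 'k) \<Rightarrow> 'x \<Rightarrow> 'k" where
  "vadd f g = (\<lambda>r. f r + g r)"
definition vsub :: "('x \<Rightarrow> 'k::field) \<Rightarrow> ('x \<Rightarrow> 'k) \<Rightarrow> 'x \<Rightarrow> 'k" where
  "vsub f g = (\<lambda>r. f r - g r)"
definition vscale :: "'k::field \<Rightarrow> ('x \<Rightarrow> 'k) \<Rightarrow> 'x \<Rightarrow> 'k" where
  "vscale c f = (\<lambda>r. c * f r)"
definition vzero :: "'x \<Rightarrow> 'k::field" where "vzero = (\<lambda>r. 0)"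

text \<open>Multiplication in kQ (bilinear extension of path composition; non-composable
  pairs of paths multiply to 0).\<close>
definition amul :: "(('v,'b) path \<Rightarrow> 'k::field) \<Rightarrow> (('v,'b) path \<Rightarrow> 'k) \<Rightarrow> ('v,'b) path \<Rightarrow> 'k" where
  "amul f g = (\<lambda>r. \<Sum>(p,q) \<in> {(p,q). f p \<noteq> 0 \<and> g q \<noteq> 0 \<and> pend q = pstart p \<and> pcomp p q = r}.
                   f p * g q)"

definition pbasis :: "('v,'b) path \<Rightarrow> ('v,'b) path \<Rightarrow> 'k::field" where
  "pbasis p = (\<lambda>r. if r = p then 1 else 0)"

definition is_ideal :: "'v set \<Rightarrow> 'b set \<Rightarrow> ('b \<Rightarrow> 'v) \<Rightarrow> ('b \<Rightarrow> 'v) \<Rightarrow> (('v,'b) path \<Rightarrow> 'k::field) set \<Rightarrow> bool" where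
  "is_ideal V A s t J =
     (J \<subseteq> path_alg V A s t \<and> vzero \<in> J \<and>
      (\<forall>x\<in>J. \<forall>y\<in>J. vadd x y \<in> J) \<and>
      (\<forall>c x. x \<in> J \<longrightarrow> vscale c x \<in> J) \<and>
      (\<forall>a\<in>path_alg V A s t. \<forall>x\<in>J. amul a x \<in> J \<and> amul x a \<in> J))"

definition gen_ideal :: "'v set \<Rightarrow> 'b set \<Rightarrow> ('b \<Rightarrow> 'v) \<Rightarrow> ('b \<Rightarrow> 'v) \<Rightarrow> (('v,'b) path \<Rightarrow> 'k::field) set \<Rightarrow> (('v,'b) path \<Rightarrow> 'k) set" where
  "gen_ideal V A s t X = \<Inter>{J. is_ideal V A s t J \<and> X \<subseteq> J}"

text \<open>kQ/J1 and kQ/J2 are isomorphic k-vector spaces iff there is a k-linear map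
  \<phi> : kQ \<rightarrow> kQ inducing a bijection kQ/J1 \<rightarrow> kQ/J2, i.e. \<phi>(x) \<in> J2 \<longleftrightarrow> x \<in> J1
  (well-defined and injective) and every class of kQ/J2 is hit (surjective).\<close>
definition quot_iso :: "'v set \<Rightarrow> 'b set \<Rightarrow> ('b \<Rightarrow> 'v) \<Rightarrow> ('b \<Rightarrow> 'v) \<Rightarrow> (('v,'b) path \<Rightarrow> 'k::field) set \<Rightarrow> (('v,'b) path \<Rightarrow> 'k) set \<Rightarrow> bool" where
  "quot_iso V A s t J1 J2 =
     (\<exists>\<phi>. (\<forall>x\<in>path_alg V A s t. \<phi> x \<in> path_alg V A s t) \<and>
          (\<forall>x\<in>path_alg V A s t. \<forall>y\<in>path_alg V A s t. \<phi> (vadd x y) = vadd (\<phi> x) (\<phi> y)) \<and>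
          (\<forall>c. \<forall>x\<in>path_alg V A s t. \<phi> (vscale c x) = vscale c (\<phi> x)) \<and>
          (\<forall>x\<in>path_alg V A s t. \<phi> x \<in> J2 \<longleftrightarrow> x \<in> J1) \<and>
          (\<forall>y\<in>path_alg V A s t. \<exists>x\<in>path_alg V A s t. vsub (\<phi> x) y \<in> J2))"

definition lin_span :: "('x \<Rightarrow> 'k::field) set \<Rightarrow> ('x \<Rightarrow> 'k) set" where
  "lin_span S = {f. \<exists>T c. finite T \<and> T \<subseteq> S \<and> f = (\<lambda>r. \<Sum>g\<in>T. c g * g r)}"

text \<open>kQ/J is finite dimensional: spanned by the classes of finitely many elements.\<close>
definition fin_dim_quot :: "'v set \<Rightarrow> 'b set \<Rightarrow> ('b \<Rightarrow> 'v) \<Rightarrow> ('b \<Rightarrow> 'v) \<Rightarrow> (('v,'b) path \<Rightarrow> 'k::field) set \<Rightarrow> bool" where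
  "fin_dim_quot V A s t J =
     (\<exists>S. finite S \<and> S \<subseteq> path_alg V A s t \<and>
          (\<forall>x\<in>path_alg V A s t. \<exists>y\<in>lin_span S. vsub x y \<in> J))"

definition gentle_pair :: "'v set \<Rightarrow> 'b set \<Rightarrow> ('b \<Rightarrow> 'v) \<Rightarrow> ('b \<Rightarrow> 'v) \<Rightarrow> ('v,'b) path set \<Rightarrow> bool" where
  "gentle_pair V A s t R =
     ((\<forall>v\<in>V. card {a\<in>A. s a = v} \<le> 2 \<and> card {a\<in>A. t a = v} \<le> 2) \<and>
      (\<forall>p\<in>R. length (parrs p) = 2) \<and>
      (\<forall>\<alpha>\<in>A. card {\<beta>\<in>A. (s \<alpha>, [\<beta>, \<alpha>], t \<beta>) \<in> R} \<le> 1 \<and>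
               card {\<gamma>\<in>A. s \<gamma> = t \<alpha> \<and> (s \<alpha>, [\<gamma>, \<alpha>], t \<gamma>) \<notin> R} \<le> 1) \<and>
      (\<forall>\<alpha>\<in>A. card {\<beta>\<in>A. (s \<beta>, [\<alpha>, \<beta>], t \<alpha>) \<in> R} \<le> 1 \<and>
               card {\<gamma>\<in>A. s \<alpha> = t \<gamma> \<and> (s \<gamma>, [\<alpha>, \<gamma>], t \<alpha>) \<notin> R} \<le> 1))"

text \<open>Arrows of Q^sp: Inl a for a \<in> Q1, Inr i for the special loop \<epsilon>_i, i \<in> Sp.\<close>
definition sp_arrows :: "'a set \<Rightarrow> 'v set \<Rightarrow> ('a + 'v) set" where
  "sp_arrows Q1 Sp = Inl ` Q1 \<union> Inr ` Sp"

fun sp_src :: "('a \<Rightarrow> 'v) \<Rightarrow> 'a + 'v \<Rightarrow> 'v" where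
  "sp_src s (Inl a) = s a"
| "sp_src s (Inr i) = i"

fun sp_tgt :: "('a \<Rightarrow> 'v) \<Rightarrow> 'a + 'v \<Rightarrow> 'v" where
  "sp_tgt t (Inl a) = t a"
| "sp_tgt t (Inr i) = i"

definition lift_path :: "('v,'a) path \<Rightarrow> ('v, 'a + 'v) path" where
  "lift_path p = (pstart p, map Inl (parrs p), pend p)"

definition eps :: "'v \<Rightarrow> ('v, 'a + 'v) path" where
  "eps i = (i, [Inr i], i)"

definition eps_sq :: "'v \<Rightarrow> ('v, 'a + 'v) path" where
  "eps_sq i = (i, [Inr i, Inr i], i)"

definition I_sp :: "('v,'a) path set \<Rightarrow> 'v set \<Rightarrow> ('v, 'a + 'v) path set" where
  "I_sp I Sp = lift_path ` I \<union> eps_sq ` Sp"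

definition skew_gentle :: "'v set \<Rightarrow> 'a set \<Rightarrow> ('a \<Rightarrow> 'v) \<Rightarrow> ('a \<Rightarrow> 'v) \<Rightarrow> 'v set \<Rightarrow> ('v,'a) path set \<Rightarrow> bool" where
  "skew_gentle V Q1 s t Sp I =
     (finite V \<and> finite Q1 \<and> (\<forall>a\<in>Q1. s a \<in> V \<and> t a \<in> V) \<and> Sp \<subseteq> V \<and>
      (\<forall>p\<in>I. valid_path V Q1 s t p) \<and>
      gentle_pair V (sp_arrows Q1 Sp) (sp_src s) (sp_tgt t) (I_sp I Sp))"

definition Isp_gens :: "('v,'a) path set \<Rightarrow> 'v set \<Rightarrow> (('v, 'a + 'v) path \<Rightarrow> 'k::field) set" where
  "Isp_gens I Sp = pbasis ` (I_sp I Sp)"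

definition Isg_gens :: "('v,'a) path set \<Rightarrow> 'v set \<Rightarrow> (('v, 'a + 'v) path \<Rightarrow> 'k::field) set" where
  "Isg_gens I Sp = pbasis ` (lift_path ` I) \<union> (\<lambda>i. vsub (pbasis (eps_sq i)) (pbasis (eps i))) ` Sp"

definition ideal_sp :: "'v set \<Rightarrow> 'a set \<Rightarrow> ('a \<Rightarrow> 'v) \<Rightarrow> ('a \<Rightarrow> 'v) \<Rightarrow> 'v set \<Rightarrow> ('v,'a) path set \<Rightarrow> (('v, 'a + 'v) path \<Rightarrow> 'k::field) set" where
  "ideal_sp V Q1 s t Sp I = gen_ideal V (sp_arrows Q1 Sp) (sp_src s) (sp_tgt t) (Isp_gens I Sp)"

definition ideal_sg :: "'v set \<Rightarrow> 'a set \<Rightarrow> ('a \<Rightarrow> 'v) \<Rightarrow> ('a \<Rightarrow> 'v) \<Rightarrow> 'v set \<Rightarrow> ('v,'a) path set \<Rightarrow> (('v, 'a + 'v) path \<Rightarrow> 'k::field) set" where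
  "ideal_sg V Q1 s t Sp I = gen_ideal V (sp_arrows Q1 Sp) (sp_src s) (sp_tgt t) (Isg_gens I Sp)"

end

theory Submission
  imports Defs
begin


declare split_paired_All[simp del] split_paired_Ex[simp del]

definition spt :: "('x \<Rightarrow> 'k::field) \<Rightarrow> 'x set" where "spt f = {p. f p \<noteq> 0}"

lemma spt_vsub: "spt (vsub f g) \<subseteq> spt f \<union> spt g" by (auto simp: spt_def vsub_def)
lemma spt_vadd: "spt (vadd f g) \<subseteq> spt f \<union> spt g" by (auto simp: spt_def vadd_def)
lemma spt_vscale: "spt (vscale c f) \<subseteq> spt f" by (auto simp: spt_def vscale_def)

lemma chain_cons:
  "(\<forall>i. Suc i < length (x#zs) \<longrightarrow> s ((x#zs)!i) = t ((x#zs)!Suc i)) \<longleftrightarrow>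
   ((zs \<noteq> [] \<longrightarrow> s x = t (hd zs)) \<and> (\<forall>i. Suc i < length zs \<longrightarrow> s (zs!i) = t (zs!Suc i)))"
  (is "?L \<longleftrightarrow> ?R")
proof
  assume L: ?L
  show ?R
  proof
    show "zs \<noteq> [] \<longrightarrow> s x = t (hd zs)" using L[rule_format, of 0] by (cases zs) auto
    show "\<forall>i. Suc i < length zs \<longrightarrow> s (zs!i) = t (zs!Suc i)"
      using L by (metis Suc_less_eq length_Cons nth_Cons_Suc)
  qed
next
  assume R: ?R
  show ?L
  proof (intro allI impI)
    fix i assume "Suc i < length (x#zs)"
    then show "s ((x#zs)!i) = t ((x#zs)!Suc i)" using R
      by (cases i) (auto simp: hd_conv_nth)
  qed
qed

lemma vp_nil: "valid_path V A s t (u,[],w) \<longleftrightarrow> u \<in> V \<and> u = w"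
  by (auto simp: valid_path_def)

lemma vp_endsV: "valid_path V A s t (u,xs,w) \<Longrightarrow> u \<in> V \<and> w \<in> V"
  by (auto simp: valid_path_def)

locale quiv =
  fixes V :: "'v set" and A :: "'b set" and s t :: "'b \<Rightarrow> 'v"
  assumes ends: "a \<in> A \<Longrightarrow> s a \<in> V \<and> t a \<in> V"
begin

abbreviation vp where "vp \<equiv> valid_path V A s t"
abbreviation PA where "PA \<equiv> path_alg V A s t"

lemma vp_cons: "vp (u, x#ws, e) \<longleftrightarrow> x \<in> A \<and> t x = e \<and> e \<in> V \<and> vp (u, ws, s x)"
proof (cases ws)
  case Nil
  then show ?thesis using ends by (auto simp: valid_path_def)
next
  case (Cons y ys)
  have ch: "(\<forall>i. Suc i < length (x#ws) \<longrightarrow> s ((x#ws)!i) = t ((x#ws)!Suc i)) \<longleftrightarrow>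
   ((ws \<noteq> [] \<longrightarrow> s x = t (hd ws)) \<and> (\<forall>i. Suc i < length ws \<longrightarrow> s (ws!i) = t (ws!Suc i)))"
    by (rule chain_cons)
  have 1: "vp (u, x#ws, e) \<longleftrightarrow> u \<in> V \<and> e \<in> V \<and> x \<in> A \<and> set ws \<subseteq> A \<and> s (last ws) = u \<and> t x = e \<and>
     s x = t (hd ws) \<and> (\<forall>i. Suc i < length ws \<longrightarrow> s (ws!i) = t (ws!Suc i))"
    unfolding valid_path_def prod.case ch using Cons by auto
  have 2: "vp (u, ws, s x) \<longleftrightarrow> u \<in> V \<and> s x \<in> V \<and> set ws \<subseteq> A \<and> s (last ws) = u \<and>
     t (hd ws) = s x \<and> (\<forall>i. Suc i < length ws \<longrightarrow> s (ws!i) = t (ws!Suc i))"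
    unfolding valid_path_def prod.case using Cons by auto
  show ?thesis unfolding 1 2 using ends by auto
qed

lemma vp_append: "vp (m, xs, w) \<Longrightarrow> vp (u, ys, m) \<Longrightarrow> vp (u, xs @ ys, w)"
proof (induction xs arbitrary: w)
  case Nil then show ?case by (simp add: vp_nil)
next
  case (Cons x xs) then show ?case by (simp add: vp_cons)
qed

lemma vp_split: "vp (u, xs @ ys, w) \<Longrightarrow> \<exists>m. vp (m, xs, w) \<and> vp (u, ys, m)"
proof (induction xs arbitrary: w)
  case Nil then show ?case using vp_endsV[of V A s t u ys w] by (auto simp: vp_nil)
next
  case (Cons x xs)
  then obtain m where "vp (m, xs, s x)" "vp (u, ys, m)" by (auto simp: vp_cons)
  then show ?case using Cons.prems by (auto simp: vp_cons)
qed

lemma pcomp_valid: "vp p \<Longrightarrow> vp q \<Longrightarrow> pend q = pstart p \<Longrightarrow> vp (pcomp p q)"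
  by (cases p; cases q) (auto simp: pcomp_def pend_def pstart_def parrs_def intro: vp_append)

lemma PA_iff: "f \<in> PA \<longleftrightarrow> finite (spt f) \<and> (\<forall>p\<in>spt f. vp p)"
  by (auto simp: path_alg_def spt_def)

lemma amul_alt:
  assumes "finite F" "finite G" "spt f \<subseteq> F" "spt g \<subseteq> G"
  shows "amul f g r = (\<Sum>(p,q)\<in>{(p,q). p \<in> F \<and> q \<in> G \<and> pend q = pstart p \<and> pcomp p q = r}. f p * g q)"
  unfolding amul_def
proof (rule sum.mono_neutral_left)
  show "finite {(p,q). p \<in> F \<and> q \<in> G \<and> pend q = pstart p \<and> pcomp p q = r}"
    by (rule finite_subset[of _ "F \<times> G"]) (use assms in auto)
qed (use assms in \<open>auto simp: spt_def\<close>)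

lemma pbasis_nz: "(pbasis p r \<noteq> (0::'k::field)) \<longleftrightarrow> r = p"
  by (simp add: pbasis_def)

lemma amul_basis: "pend q = pstart p \<Longrightarrow> amul (pbasis p) (pbasis q) = (pbasis (pcomp p q) :: _ \<Rightarrow> 'k::field)"
proof
  fix r assume h: "pend q = pstart p"
  have "{(p',q'). pbasis p p' \<noteq> (0::'k::field) \<and> pbasis q q' \<noteq> (0::'k) \<and> pend q' = pstart p' \<and> pcomp p' q' = r}
        = {(p',q'). p' = p \<and> q' = q \<and> pend q' = pstart p' \<and> pcomp p' q' = r}"
    unfolding pbasis_nz ..
  also have "\<dots> = (if pcomp p q = r then {(p,q)} else {})" using h by auto
  finally have e: "{(p',q'). pbasis p p' \<noteq> (0::'k::field) \<and> pbasis q q' \<noteq> (0::'k) \<and> pend q' = pstart p' \<and> pcomp p' q' = r}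
        = (if pcomp p q = r then {(p,q)} else {})" .
  show "amul (pbasis p) (pbasis q) r = (pbasis (pcomp p q) r :: 'k::field)"
    unfolding amul_def e by (simp add: pbasis_def)
qed


lemma amul_vsub_left:
  assumes "finite (spt f)" "finite (spt g)" "finite (spt h)"
  shows "amul (vsub f g) h = vsub (amul f h) (amul g h)"
proof
  fix r
  let ?F = "spt f \<union> spt g"
  have "amul (vsub f g) h r = (\<Sum>(p,q)\<in>{(p,q). p \<in> ?F \<and> q \<in> spt h \<and> pend q = pstart p \<and> pcomp p q = r}. vsub f g p * h q)"
    by (rule amul_alt) (use assms spt_vsub[of f g] in auto)
  moreover have "amul f h r = (\<Sum>(p,q)\<in>{(p,q). p \<in> ?F \<and> q \<in> spt h \<and> pend q = pstart p \<and> pcomp p q = r}. f p * h q)"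
    by (rule amul_alt) (use assms in auto)
  moreover have "amul g h r = (\<Sum>(p,q)\<in>{(p,q). p \<in> ?F \<and> q \<in> spt h \<and> pend q = pstart p \<and> pcomp p q = r}. g p * h q)"
    by (rule amul_alt) (use assms in auto)
  ultimately show "amul (vsub f g) h r = vsub (amul f h) (amul g h) r"
    by (simp add: vsub_def left_diff_distrib sum_subtractf case_prod_unfold)
qed

lemma amul_vsub_right:
  assumes "finite (spt f)" "finite (spt g)" "finite (spt h)"
  shows "amul h (vsub f g) = vsub (amul h f) (amul h g)"
proof
  fix r
  let ?F = "spt f \<union> spt g"
  have "amul h (vsub f g) r = (\<Sum>(p,q)\<in>{(p,q). p \<in> spt h \<and> q \<in> ?F \<and> pend q = pstart p \<and> pcomp p q = r}. h p * vsub f g q)"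
    by (rule amul_alt) (use assms spt_vsub[of f g] in auto)
  moreover have "amul h f r = (\<Sum>(p,q)\<in>{(p,q). p \<in> spt h \<and> q \<in> ?F \<and> pend q = pstart p \<and> pcomp p q = r}. h p * f q)"
    by (rule amul_alt) (use assms in auto)
  moreover have "amul h g r = (\<Sum>(p,q)\<in>{(p,q). p \<in> spt h \<and> q \<in> ?F \<and> pend q = pstart p \<and> pcomp p q = r}. h p * g q)"
    by (rule amul_alt) (use assms in auto)
  ultimately show "amul h (vsub f g) r = vsub (amul h f) (amul h g) r"
    by (simp add: vsub_def right_diff_distrib sum_subtractf case_prod_unfold)
qed

lemma amul_spt:
  "r \<in> spt (amul f g) \<Longrightarrow> \<exists>p q. f p \<noteq> 0 \<and> g q \<noteq> 0 \<and> pend q = pstart p \<and> pcomp p q = r"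
proof -
  assume "r \<in> spt (amul f g)"
  then have "(\<Sum>(p,q)\<in>{(p,q). f p \<noteq> 0 \<and> g q \<noteq> 0 \<and> pend q = pstart p \<and> pcomp p q = r}. f p * g q) \<noteq> 0"
    by (simp add: spt_def amul_def)
  then obtain x where "x \<in> {(p,q). f p \<noteq> 0 \<and> g q \<noteq> 0 \<and> pend q = pstart p \<and> pcomp p q = r}"
    by (rule sum.not_neutral_contains_not_neutral)
  then show ?thesis by (cases x) blast
qed

lemma amul_PA:
  assumes "f \<in> PA" "g \<in> PA" shows "amul f g \<in> PA"
proof -
  let ?P = "{(p,q). p \<in> spt f \<and> q \<in> spt g \<and> pend q = pstart p}"
  have fin: "finite (spt f)" "finite (spt g)" using assms PA_iff by auto
  have sub1: "spt (amul f g) \<subseteq> (\<lambda>(p,q). pcomp p q) ` ?P"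
  proof
    fix r assume "r \<in> spt (amul f g)"
    then obtain p q where pq: "f p \<noteq> 0" "g q \<noteq> 0" "pend q = pstart p" "pcomp p q = r"
      using amul_spt by blast
    then show "r \<in> (\<lambda>(p,q). pcomp p q) ` ?P" unfolding spt_def
      by (intro image_eqI[of _ _ "(p,q)"]) auto
  qed
  have sub2: "\<forall>r\<in>spt (amul f g). vp r"
  proof
    fix r assume "r \<in> spt (amul f g)"
    then obtain p q where pq: "f p \<noteq> 0" "g q \<noteq> 0" "pend q = pstart p" "pcomp p q = r"
      using amul_spt by blast
    have "vp p" "vp q" using pq(1,2) assms by (auto simp: PA_iff spt_def)
    then show "vp r" using pq pcomp_valid by blast
  qed
  have "finite ?P" by (rule finite_subset[of _ "spt f \<times> spt g"]) (use fin in auto)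
  then have "finite (spt (amul f g))" using sub1 by (meson finite_imageI finite_subset)
  then show ?thesis using sub2 by (simp add: PA_iff)
qed

end



definition Rd :: "(('v,'b) path \<Rightarrow> ('v,'b) path option) \<Rightarrow> (('v,'b) path \<Rightarrow> 'k::field) \<Rightarrow> ('v,'b) path \<Rightarrow> 'k" where
  "Rd red f = (\<lambda>r. \<Sum>p\<in>{p. f p \<noteq> 0 \<and> red p = Some r}. f p)"

lemma Rd_alt:
  assumes "finite F" "spt f \<subseteq> F"
  shows "Rd red f r = (\<Sum>p\<in>{p\<in>F. red p = Some r}. f p)"
  unfolding Rd_def
  by (rule sum.mono_neutral_left) (use assms in \<open>auto simp: spt_def\<close>)

lemma Rd_vsub:
  assumes "finite (spt f)" "finite (spt g)"
  shows "Rd red (vsub f g) = vsub (Rd red f) (Rd red g)"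
proof
  fix r
  let ?F = "spt f \<union> spt g"
  have "Rd red (vsub f g) r = (\<Sum>p\<in>{p\<in>?F. red p = Some r}. vsub f g p)"
    by (rule Rd_alt) (use assms spt_vsub[of f g] in auto)
  moreover have "Rd red f r = (\<Sum>p\<in>{p\<in>?F. red p = Some r}. f p)"
    by (rule Rd_alt) (use assms in auto)
  moreover have "Rd red g r = (\<Sum>p\<in>{p\<in>?F. red p = Some r}. g p)"
    by (rule Rd_alt) (use assms in auto)
  ultimately show "Rd red (vsub f g) r = vsub (Rd red f) (Rd red g) r"
    by (simp add: vsub_def sum_subtractf)
qed

lemma Rd_vadd:
  assumes "finite (spt f)" "finite (spt g)"
  shows "Rd red (vadd f g) = vadd (Rd red f) (Rd red g)"
proof
  fix r
  let ?F = "spt f \<union> spt g"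
  have "Rd red (vadd f g) r = (\<Sum>p\<in>{p\<in>?F. red p = Some r}. vadd f g p)"
    by (rule Rd_alt) (use assms spt_vadd[of f g] in auto)
  moreover have "Rd red f r = (\<Sum>p\<in>{p\<in>?F. red p = Some r}. f p)"
    by (rule Rd_alt) (use assms in auto)
  moreover have "Rd red g r = (\<Sum>p\<in>{p\<in>?F. red p = Some r}. g p)"
    by (rule Rd_alt) (use assms in auto)
  ultimately show "Rd red (vadd f g) r = vadd (Rd red f) (Rd red g) r"
    by (simp add: vadd_def sum.distrib)
qed

lemma Rd_vscale:
  assumes "finite (spt f)"
  shows "Rd red (vscale c f) = vscale c (Rd red f)"
proof
  fix r
  have "Rd red (vscale c f) r = (\<Sum>p\<in>{p\<in>spt f. red p = Some r}. vscale c f p)"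
    by (rule Rd_alt) (use assms spt_vscale[of c f] in auto)
  moreover have "Rd red f r = (\<Sum>p\<in>{p\<in>spt f. red p = Some r}. f p)"
    by (rule Rd_alt) (use assms in auto)
  ultimately show "Rd red (vscale c f) r = vscale c (Rd red f) r"
    by (simp add: vscale_def sum_distrib_left)
qed

lemma Rd_vzero: "Rd red vzero = vzero"
  by (simp add: Rd_def vzero_def fun_eq_iff)

lemma Rd_basis: "Rd red (pbasis p :: _ \<Rightarrow> 'k::field) = (case red p of None \<Rightarrow> vzero | Some q \<Rightarrow> pbasis q)"
proof
  fix r
  have e1: "Rd red (pbasis p :: _ \<Rightarrow> 'k::field) r = (\<Sum>p'\<in>{p'\<in>{p}. red p' = Some r}. pbasis p p')"
    by (rule Rd_alt) (auto simp: spt_def pbasis_def)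
  have e2: "{p'\<in>{p}. red p' = Some r} = (if red p = Some r then {p} else {})" by auto
  show "Rd red (pbasis p :: _ \<Rightarrow> 'k::field) r = (case red p of None \<Rightarrow> vzero | Some q \<Rightarrow> pbasis q) r"
    unfolding e1 e2 by (cases "red p") (auto simp: pbasis_def vzero_def)
qed

lemma Rd_spt: "spt (Rd red f) \<subseteq> (\<lambda>p. the (red p)) ` spt f \<and> (\<forall>r\<in>spt (Rd red f). \<exists>p\<in>spt f. red p = Some r)"
proof (intro conjI ballI subsetI)
  fix r assume "r \<in> spt (Rd red f)"
  then have "(\<Sum>p\<in>{p. f p \<noteq> 0 \<and> red p = Some r}. f p) \<noteq> 0"
    unfolding spt_def Rd_def by simp
  then obtain p where "p \<in> {p. f p \<noteq> 0 \<and> red p = Some r}"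
    by (rule sum.not_neutral_contains_not_neutral)
  then have "f p \<noteq> 0" "red p = Some r" by auto
  then show "r \<in> (\<lambda>p. the (red p)) ` spt f" "\<exists>p\<in>spt f. red p = Some r"
    by (auto simp: spt_def image_iff intro!: bexI[of _ p])
qed

lemma case_some: "(case x of None \<Rightarrow> None | Some y \<Rightarrow> f y) = Some r \<Longrightarrow> x = Some (the x)"
  by (cases x) auto

context quiv begin

lemma Rd_PA:
  assumes "\<And>p q. vp p \<Longrightarrow> red p = Some q \<Longrightarrow> vp q" "f \<in> PA"
  shows "Rd red f \<in> PA"
proof -
  have "finite (spt f)" "\<forall>p\<in>spt f. vp p" using assms(2) PA_iff by auto
  then show ?thesis unfolding PA_iff using Rd_spt[of red f] assms(1)
    by (meson finite_imageI finite_subset)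
qed

lemma Rd_amul:
  assumes "finite (spt f)" "finite (spt g)"
  shows "Rd red (amul f g) r = (\<Sum>(p,q)\<in>{(p,q). p \<in> spt f \<and> q \<in> spt g \<and> pend q = pstart p \<and> red (pcomp p q) = Some r}. f p * g q)"
proof -
  let ?P = "{(p,q). p \<in> spt f \<and> q \<in> spt g \<and> pend q = pstart p}"
  let ?c = "\<lambda>(p,q). pcomp p q"
  let ?U = "?c ` ?P"
  have finP: "finite ?P" by (rule finite_subset[of _ "spt f \<times> spt g"]) (use assms in auto)
  have sub: "spt (amul f g) \<subseteq> ?U"
  proof
    fix u assume "u \<in> spt (amul f g)"
    then obtain p q where pq: "f p \<noteq> 0" "g q \<noteq> 0" "pend q = pstart p" "pcomp p q = u"
      using amul_spt by blast
    then show "u \<in> ?U" unfolding spt_def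
      by (intro image_eqI[of _ _ "(p,q)"]) auto
  qed
  have am: "amul f g u = (\<Sum>x\<in>{x\<in>?P. ?c x = u}. case x of (p,q) \<Rightarrow> f p * g q)" for u
  proof -
    have "amul f g u = (\<Sum>(p,q)\<in>{(p,q). p \<in> spt f \<and> q \<in> spt g \<and> pend q = pstart p \<and> pcomp p q = u}. f p * g q)"
      by (rule amul_alt) (use assms in auto)
    also have "{(p,q). p \<in> spt f \<and> q \<in> spt g \<and> pend q = pstart p \<and> pcomp p q = u} = {x\<in>?P. ?c x = u}"
      by auto
    finally show ?thesis .
  qed
  let ?S = "{x\<in>?P. red (?c x) = Some r}"
  let ?T = "{u\<in>?U. red u = Some r}"
  have "Rd red (amul f g) r = (\<Sum>u\<in>?T. amul f g u)"
    by (rule Rd_alt) (use finP sub in auto)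
  also have "\<dots> = (\<Sum>u\<in>?T. \<Sum>x\<in>{x\<in>?S. ?c x = u}. case x of (p,q) \<Rightarrow> f p * g q)"
  proof (rule sum.cong[OF refl])
    fix u assume "u \<in> ?T"
    then have "{x\<in>?P. ?c x = u} = {x\<in>?S. ?c x = u}" by auto
    then show "amul f g u = (\<Sum>x\<in>{x\<in>?S. ?c x = u}. case x of (p,q) \<Rightarrow> f p * g q)"
      using am[of u] by simp
  qed
  also have "\<dots> = (\<Sum>x\<in>?S. case x of (p,q) \<Rightarrow> f p * g q)"
    by (rule sum.group) (use finP in auto)
  also have "?S = {(p,q). p \<in> spt f \<and> q \<in> spt g \<and> pend q = pstart p \<and> red (pcomp p q) = Some r}"
    by auto
  finally show ?thesis .
qed

lemma ker_right:
  assumes "finite (spt f)" "finite (spt g)" "Rd red g = vzero"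
    and C1: "\<And>q q'. red q = Some q' \<Longrightarrow> pstart q' = pstart q \<and> pend q' = pend q"
    and C2: "\<And>p q. pend q = pstart p \<Longrightarrow> red (pcomp p q) = (case red q of None \<Rightarrow> None | Some q' \<Rightarrow> red (pcomp p q'))"
  shows "Rd red (amul f g) = vzero"
proof
  fix r
  let ?T = "\<lambda>p. {q\<in>spt g. pend q = pstart p \<and> red (pcomp p q) = Some r}"
  have "Rd red (amul f g) r = (\<Sum>(p,q)\<in>Sigma (spt f) ?T. f p * g q)"
    unfolding Rd_amul[OF assms(1,2)] by (rule sum.cong) auto
  also have "\<dots> = (\<Sum>p\<in>spt f. \<Sum>q\<in>?T p. f p * g q)"
    by (rule sum.Sigma[symmetric]) (use assms in auto)
  also have "\<dots> = (\<Sum>p\<in>spt f. f p * (\<Sum>q\<in>?T p. g q))"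
    by (simp add: sum_distrib_left)
  also have "\<dots> = 0"
  proof (rule sum.neutral, rule ballI)
    fix p assume "p \<in> spt f"
    let ?h = "\<lambda>q. the (red q)"
    have finT: "finite (?T p)" using assms by auto
    have "(\<Sum>q\<in>?T p. g q) = (\<Sum>y\<in>?h ` ?T p. \<Sum>q\<in>{q\<in>?T p. ?h q = y}. g q)"
      by (rule sum.group[symmetric]) (use finT in auto)
    also have "\<dots> = (\<Sum>y\<in>?h ` ?T p. 0)"
    proof (rule sum.cong[OF refl])
      fix y assume "y \<in> ?h ` ?T p"
      then obtain q0 where q0: "q0 \<in> ?T p" "y = ?h q0" by auto
      have q0': "pend q0 = pstart p" "red (pcomp p q0) = Some r" using q0(1) by auto
      have rq0: "red q0 = Some y" using case_some[OF C2[OF q0'(1), symmetric, THEN trans, OF q0'(2)]] q0(2) by simp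
      have yW: "pend y = pstart p" "red (pcomp p y) = Some r"
        using q0' C1[OF rq0] C2[OF q0'(1)] rq0 by auto
      have "{q\<in>?T p. ?h q = y} = {q\<in>spt g. red q = Some y}"
      proof (intro set_eqI iffI)
        fix q assume qq: "q \<in> {q\<in>?T p. ?h q = y}"
        then have q': "pend q = pstart p" "red (pcomp p q) = Some r" "q \<in> spt g" "?h q = y" by auto
        then show "q \<in> {q\<in>spt g. red q = Some y}"
          using case_some[OF C2[OF q'(1), symmetric, THEN trans, OF q'(2)]] by simp
      next
        fix q assume q: "q \<in> {q\<in>spt g. red q = Some y}"
        then have "pend q = pstart p" using C1[of q y] yW by auto
        then show "q \<in> {q\<in>?T p. ?h q = y}"
          using q C2[of q p] yW by auto
      qed
      moreover have "(\<Sum>q\<in>{q\<in>spt g. red q = Some y}. g q) = Rd red g y"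
        by (rule Rd_alt[symmetric]) (use assms in auto)
      ultimately show "(\<Sum>q\<in>{q\<in>?T p. ?h q = y}. g q) = 0"
        using assms(3) by (simp add: vzero_def)
    qed
    finally show "f p * (\<Sum>q\<in>?T p. g q) = 0" by simp
  qed
  finally show "Rd red (amul f g) r = vzero r" by (simp add: vzero_def)
qed

lemma ker_left:
  assumes "finite (spt f)" "finite (spt g)" "Rd red f = vzero"
    and C1: "\<And>q q'. red q = Some q' \<Longrightarrow> pstart q' = pstart q \<and> pend q' = pend q"
    and C3: "\<And>p q. pend q = pstart p \<Longrightarrow> red (pcomp p q) = (case red p of None \<Rightarrow> None | Some p' \<Rightarrow> red (pcomp p' q))"
  shows "Rd red (amul f g) = vzero"
proof
  fix r
  let ?T = "\<lambda>q. {p\<in>spt f. pend q = pstart p \<and> red (pcomp p q) = Some r}"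
  have "Rd red (amul f g) r = (\<Sum>(q,p)\<in>Sigma (spt g) ?T. f p * g q)"
    unfolding Rd_amul[OF assms(1,2)]
    by (rule sum.reindex_bij_witness[where i="\<lambda>(q,p). (p,q)" and j="\<lambda>(p,q). (q,p)"]) auto
  also have "\<dots> = (\<Sum>q\<in>spt g. \<Sum>p\<in>?T q. f p * g q)"
    by (rule sum.Sigma[symmetric]) (use assms in auto)
  also have "\<dots> = (\<Sum>q\<in>spt g. (\<Sum>p\<in>?T q. f p) * g q)"
    by (simp add: sum_distrib_right)
  also have "\<dots> = 0"
  proof (rule sum.neutral, rule ballI)
    fix q assume "q \<in> spt g"
    let ?h = "\<lambda>p. the (red p)"
    have finT: "finite (?T q)" using assms by auto
    have "(\<Sum>p\<in>?T q. f p) = (\<Sum>y\<in>?h ` ?T q. \<Sum>p\<in>{p\<in>?T q. ?h p = y}. f p)"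
      by (rule sum.group[symmetric]) (use finT in auto)
    also have "\<dots> = (\<Sum>y\<in>?h ` ?T q. 0)"
    proof (rule sum.cong[OF refl])
      fix y assume "y \<in> ?h ` ?T q"
      then obtain p0 where p0: "p0 \<in> ?T q" "y = ?h p0" by auto
      have p0': "pend q = pstart p0" "red (pcomp p0 q) = Some r" using p0(1) by auto
      have rp0: "red p0 = Some y" using case_some[OF C3[OF p0'(1), symmetric, THEN trans, OF p0'(2)]] p0(2) by simp
      have yW: "pend q = pstart y" "red (pcomp y q) = Some r"
        using p0' C1[OF rp0] C3[of q p0] rp0 by auto
      have "{p\<in>?T q. ?h p = y} = {p\<in>spt f. red p = Some y}"
      proof (intro set_eqI iffI)
        fix p assume pp: "p \<in> {p\<in>?T q. ?h p = y}"
        then have p': "pend q = pstart p" "red (pcomp p q) = Some r" "p \<in> spt f" "?h p = y" by auto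
        then show "p \<in> {p\<in>spt f. red p = Some y}"
          using case_some[OF C3[OF p'(1), symmetric, THEN trans, OF p'(2)]] by simp
      next
        fix p assume p: "p \<in> {p\<in>spt f. red p = Some y}"
        then have "pend q = pstart p" using C1[of p y] yW by auto
        then show "p \<in> {p\<in>?T q. ?h p = y}"
          using p C3[of q p] yW by auto
      qed
      moreover have "(\<Sum>p\<in>{p\<in>spt f. red p = Some y}. f p) = Rd red f y"
        by (rule Rd_alt[symmetric]) (use assms in auto)
      ultimately show "(\<Sum>p\<in>{p\<in>?T q. ?h p = y}. f p) = 0"
        using assms(3) by (simp add: vzero_def)
    qed
    finally show "(\<Sum>p\<in>?T q. f p) * g q = 0" by simp
  qed
  finally show "Rd red (amul f g) r = vzero r" by (simp add: vzero_def)
qed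

end



context quiv begin

lemma PA_vzero: "vzero \<in> PA" by (simp add: PA_iff spt_def vzero_def)

lemma PA_vadd: "f \<in> PA \<Longrightarrow> g \<in> PA \<Longrightarrow> vadd f g \<in> PA"
  unfolding PA_iff using spt_vadd[of f g] by (meson UnE finite_UnI finite_subset subsetD)

lemma PA_vscale: "f \<in> PA \<Longrightarrow> vscale c f \<in> PA"
  unfolding PA_iff using spt_vscale[of c f] by (meson finite_subset subsetD)

lemma PA_vsub: "f \<in> PA \<Longrightarrow> g \<in> PA \<Longrightarrow> vsub f g \<in> PA"
  unfolding PA_iff using spt_vsub[of f g] by (meson UnE finite_UnI finite_subset subsetD)

lemma PA_ideal: "is_ideal V A s t (PA :: (_ \<Rightarrow> 'k::field) set)"
  unfolding is_ideal_def using PA_vzero PA_vadd PA_vscale amul_PA by blast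

lemma is_ideal_Inter:
  assumes "F \<noteq> {}" "\<And>J. J \<in> F \<Longrightarrow> is_ideal V A s t (J :: (_ \<Rightarrow> 'k::field) set)"
  shows "is_ideal V A s t (\<Inter>F)"
proof -
  have h: "J \<subseteq> PA \<and> vzero \<in> J \<and> (\<forall>x\<in>J. \<forall>y\<in>J. vadd x y \<in> J) \<and> (\<forall>c x. x\<in>J \<longrightarrow> vscale c x \<in> J) \<and>
     (\<forall>a\<in>PA. \<forall>x\<in>J. amul a x \<in> J \<and> amul x a \<in> J)" if "J \<in> F" for J
    using assms(2)[OF that] unfolding is_ideal_def by blast
  obtain J0 where J0: "J0 \<in> F" using assms(1) by blast
  have a: "\<Inter>F \<subseteq> PA" using h[OF J0] J0 by blast
  have b: "vzero \<in> \<Inter>F" using h by blast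
  have c: "\<forall>x\<in>\<Inter>F. \<forall>y\<in>\<Inter>F. vadd x y \<in> \<Inter>F"
  proof (intro ballI InterI)
    fix x y J assume "x \<in> \<Inter>F" "y \<in> \<Inter>F" "J \<in> F"
    then show "vadd x y \<in> J" using h[of J] by blast
  qed
  have d: "\<forall>c x. x \<in> \<Inter>F \<longrightarrow> vscale c x \<in> \<Inter>F"
  proof (intro allI impI InterI)
    fix c x J assume "x \<in> \<Inter>F" "J \<in> F"
    then show "vscale c x \<in> J" using h[of J] by blast
  qed
  have e: "\<forall>a\<in>PA. \<forall>x\<in>\<Inter>F. amul a x \<in> \<Inter>F \<and> amul x a \<in> \<Inter>F"
  proof (intro ballI conjI InterI)
    fix a x J assume "a \<in> (PA :: (_ \<Rightarrow> 'k::field) set)" "x \<in> \<Inter>F" "J \<in> F"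
    then show "amul a x \<in> J" "amul x a \<in> J" using h[of J] by blast+
  qed
  show ?thesis unfolding is_ideal_def using a b c d e by blast
qed

lemma gen_ideal_is:
  assumes "X \<subseteq> (PA :: (_ \<Rightarrow> 'k::field) set)"
  shows "is_ideal V A s t (gen_ideal V A s t X)"
  unfolding gen_ideal_def
proof (rule is_ideal_Inter)
  show "{J. is_ideal V A s t J \<and> X \<subseteq> J} \<noteq> {}" using PA_ideal assms by blast
qed blast

lemma gen_ideal_sup: "X \<subseteq> gen_ideal V A s t X"
  unfolding gen_ideal_def by blast

lemma gen_ideal_least: "is_ideal V A s t J \<Longrightarrow> X \<subseteq> J \<Longrightarrow> gen_ideal V A s t X \<subseteq> J"
  unfolding gen_ideal_def by blast

end

lemma ideal_vsub:
  assumes "is_ideal V A s t J" "x \<in> J" "y \<in> J" shows "vsub x y \<in> J"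
proof -
  have "vsub x y = vadd x (vscale (-1) y)" by (simp add: vsub_def vadd_def vscale_def fun_eq_iff)
  then show ?thesis using assms unfolding is_ideal_def by metis
qed

lemma ideal_sum:
  assumes "is_ideal V A s t J" "finite T" "\<forall>p\<in>T. h p \<in> J"
  shows "(\<lambda>r. \<Sum>p\<in>T. c p * h p r) \<in> J"
  using assms(2,3)
proof (induction T rule: finite_induct)
  case empty
  then show ?case using assms(1) by (simp add: is_ideal_def vzero_def)
next
  case (insert x F)
  have "(\<lambda>r. \<Sum>p\<in>insert x F. c p * h p r) = vadd (vscale (c x) (h x)) (\<lambda>r. \<Sum>p\<in>F. c p * h p r)"
    using insert.hyps by (simp add: vadd_def vscale_def fun_eq_iff)
  then show ?case using insert assms(1) unfolding is_ideal_def by auto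
qed

context quiv begin

lemma ker_ideal:
  assumes C1: "\<And>q q'. red q = Some q' \<Longrightarrow> pstart q' = pstart q \<and> pend q' = pend q"
    and C2: "\<And>p q. pend q = pstart p \<Longrightarrow> red (pcomp p q) = (case red q of None \<Rightarrow> None | Some q' \<Rightarrow> red (pcomp p q'))"
    and C3: "\<And>p q. pend q = pstart p \<Longrightarrow> red (pcomp p q) = (case red p of None \<Rightarrow> None | Some p' \<Rightarrow> red (pcomp p' q))"
  shows "is_ideal V A s t {f \<in> (PA :: (_ \<Rightarrow> 'k::field) set). Rd red f = vzero}"
proof -
  let ?K = "{f \<in> (PA :: (_ \<Rightarrow> 'k::field) set). Rd red f = vzero}"
  have a: "?K \<subseteq> PA" by blast
  have b: "vzero \<in> ?K" using PA_vzero Rd_vzero by blast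
  have c: "\<forall>x\<in>?K. \<forall>y\<in>?K. vadd x y \<in> ?K"
  proof (intro ballI)
    fix x y assume x: "x \<in> ?K" and y: "y \<in> ?K"
    then have f: "finite (spt x)" "finite (spt y)" by (auto simp: PA_iff)
    have "Rd red (vadd x y) = vadd (Rd red x) (Rd red y)" by (rule Rd_vadd[OF f])
    also have "\<dots> = vzero" using x y by (simp add: vadd_def vzero_def)
    finally show "vadd x y \<in> ?K" using PA_vadd x y by blast
  qed
  have d: "\<forall>c x. x \<in> ?K \<longrightarrow> vscale c x \<in> ?K"
  proof (intro allI impI)
    fix c :: 'k and x assume x: "x \<in> ?K"
    then have f: "finite (spt x)" by (auto simp: PA_iff)
    have "Rd red (vscale c x) = vscale c (Rd red x)" by (rule Rd_vscale[OF f])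
    also have "\<dots> = vzero" using x by (simp add: vscale_def vzero_def)
    finally show "vscale c x \<in> ?K" using PA_vscale x by blast
  qed
  have e: "\<forall>a\<in>PA. \<forall>x\<in>?K. amul a x \<in> ?K \<and> amul x a \<in> ?K"
  proof (intro ballI conjI)
    fix a x assume a: "a \<in> (PA :: (_ \<Rightarrow> 'k::field) set)" and x: "x \<in> ?K"
    have fa: "finite (spt a)" using a by (simp add: PA_iff)
    have fx: "finite (spt x)" and rx: "Rd red x = vzero" using x by (auto simp: PA_iff)
    have xP: "x \<in> PA" using x by blast
    show "amul a x \<in> ?K" using amul_PA[OF a xP] ker_right[OF fa fx rx C1 C2] by blast
    show "amul x a \<in> ?K" using amul_PA[OF xP a] ker_left[OF fx fa rx C1 C3] by blast
  qed
  show ?thesis unfolding is_ideal_def using a b c d e by blast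
qed

lemma decomp:
  assumes "finite (spt x)"
  shows "vsub x (Rd red x) = (\<lambda>r. \<Sum>p\<in>spt x. x p * vsub (pbasis p) (case red p of None \<Rightarrow> vzero | Some q \<Rightarrow> pbasis q) r)"
proof
  fix r
  have 1: "x r = (\<Sum>p\<in>spt x. x p * pbasis p r)"
  proof -
    have "(\<Sum>p\<in>spt x. x p * pbasis p r) = (\<Sum>p\<in>spt x. if p = r then x p else 0)"
      by (rule sum.cong) (auto simp: pbasis_def)
    also have "\<dots> = (if r \<in> spt x then x r else 0)" using assms by (simp add: sum.delta')
    also have "\<dots> = x r" by (simp add: spt_def)
    finally show ?thesis by simp
  qed
  have 2: "Rd red x r = (\<Sum>p\<in>spt x. x p * (case red p of None \<Rightarrow> vzero | Some q \<Rightarrow> pbasis q) r)"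
  proof -
    have "Rd red x r = (\<Sum>p\<in>{p\<in>spt x. red p = Some r}. x p)" by (rule Rd_alt) (use assms in auto)
    also have "\<dots> = (\<Sum>p\<in>spt x. if red p = Some r then x p else 0)" using assms by (rule sum.inter_filter)
    also have "\<dots> = (\<Sum>p\<in>spt x. x p * (case red p of None \<Rightarrow> vzero | Some q \<Rightarrow> pbasis q) r)"
      by (rule sum.cong[OF refl]) (auto simp: pbasis_def vzero_def split: option.split)
    finally show ?thesis .
  qed
  show "vsub x (Rd red x) r = (\<lambda>r. \<Sum>p\<in>spt x. x p * vsub (pbasis p) (case red p of None \<Rightarrow> vzero | Some q \<Rightarrow> pbasis q) r) r"
    unfolding vsub_def 1 2 by (simp add: right_diff_distrib sum_subtractf)
qed

lemma reduction:
  fixes X :: "(('v,'b) path \<Rightarrow> 'k::field) set"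
  assumes XPA: "X \<subseteq> PA"
    and C1: "\<And>q q'. red q = Some q' \<Longrightarrow> pstart q' = pstart q \<and> pend q' = pend q"
    and C2: "\<And>p q. pend q = pstart p \<Longrightarrow> red (pcomp p q) = (case red q of None \<Rightarrow> None | Some q' \<Rightarrow> red (pcomp p q'))"
    and C3: "\<And>p q. pend q = pstart p \<Longrightarrow> red (pcomp p q) = (case red p of None \<Rightarrow> None | Some p' \<Rightarrow> red (pcomp p' q))"
    and P1: "\<And>p q. vp p \<Longrightarrow> red p = Some q \<Longrightarrow> vp q"
    and P3: "\<And>p. vp p \<Longrightarrow> (case red p of None \<Rightarrow> pbasis p \<in> gen_ideal V A s t X
                 | Some q \<Rightarrow> vsub (pbasis p) (pbasis q) \<in> gen_ideal V A s t X)"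
    and P4: "\<And>g. g \<in> X \<Longrightarrow> Rd red g = vzero"
    and x: "x \<in> PA"
  shows "(x \<in> gen_ideal V A s t X \<longleftrightarrow> Rd red x = vzero) \<and> vsub x (Rd red x) \<in> gen_ideal V A s t X \<and> Rd red x \<in> PA"
proof -
  let ?J = "gen_ideal V A s t X"
  have J: "is_ideal V A s t ?J" by (rule gen_ideal_is[OF XPA])
  have fx: "finite (spt x)" "\<forall>p\<in>spt x. vp p" using x by (auto simp: PA_iff)
  have mem: "vsub (pbasis p) (case red p of None \<Rightarrow> vzero | Some q \<Rightarrow> pbasis q) \<in> ?J" if "p \<in> spt x" for p
  proof -
    have "vp p" using that fx by auto
    from P3[OF this] show ?thesis
      by (cases "red p") (auto simp: vsub_def vzero_def)
  qed
  have D: "vsub x (Rd red x) \<in> ?J"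
    unfolding decomp[OF fx(1)] by (rule ideal_sum[OF J fx(1)]) (use mem in blast)
  have sub: "?J \<subseteq> {f \<in> PA. Rd red f = vzero}"
    by (rule gen_ideal_least[OF ker_ideal[OF C1 C2 C3]]) (use XPA P4 in auto)
  have "x \<in> ?J \<longleftrightarrow> Rd red x = vzero"
  proof
    assume "x \<in> ?J" then show "Rd red x = vzero" using sub by blast
  next
    assume "Rd red x = vzero"
    then have "vsub x (Rd red x) = x" by (simp add: vsub_def vzero_def)
    then show "x \<in> ?J" using D by simp
  qed
  moreover have "Rd red x \<in> PA" using Rd_PA[where red=red and f=x] P1 x by blast
  ultimately show ?thesis using D by blast
qed

end



definition pairR :: "('v,'b) path set \<Rightarrow> 'b \<Rightarrow> 'b \<Rightarrow> bool" where
  "pairR R a b = (\<exists>u w. (u,[a,b],w) \<in> R)"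

fun badw :: "('b \<Rightarrow> 'b \<Rightarrow> bool) \<Rightarrow> 'b list \<Rightarrow> bool" where
  "badw P (x # y # zs) = (P x y \<or> badw P (y # zs))"
| "badw P _ = False"

lemma badw_cons: "badw P (x # ws) = (badw P ws \<or> (ws \<noteq> [] \<and> P x (hd ws)))"
  by (cases ws) auto

lemma badw_app1: "badw P ws \<Longrightarrow> badw P (xs @ ws)"
  by (induction xs) (auto simp: badw_cons)

lemma badw_app2: "badw P xs \<Longrightarrow> badw P (xs @ ws)"
proof (induction xs)
  case Nil then show ?case by simp
next
  case (Cons x xs) then show ?case by (cases xs) (auto simp: badw_cons)
qed

lemma badw_split: "badw P xs \<Longrightarrow> \<exists>pre a b post. xs = pre @ a # b # post \<and> P a b"
proof (induction xs)
  case Nil then show ?case by simp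
next
  case (Cons x ws)
  show ?case
  proof (cases "badw P ws")
    case True
    then obtain pre a b post where "ws = pre @ a # b # post" "P a b" using Cons.IH by blast
    then show ?thesis by (intro exI[of _ "x # pre"]) auto
  next
    case False
    then have "ws \<noteq> [] \<and> P x (hd ws)" using Cons.prems by (simp add: badw_cons)
    then obtain b post where "ws = b # post" "P x b" by (cases ws) auto
    then show ?thesis by (intro exI[of _ "[]"]) auto
  qed
qed

lemma badw_mono: "(\<And>a b. a \<in> S \<Longrightarrow> b \<in> S \<Longrightarrow> Q a b \<Longrightarrow> P a b) \<Longrightarrow> set xs \<subseteq> S \<Longrightarrow> badw Q xs \<Longrightarrow> badw P xs"
proof (induction xs)
  case Nil then show ?case by simp
next
  case (Cons x ws) then show ?case by (cases ws) (auto simp: badw_cons)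
qed

lemma badw_or: "badw (\<lambda>a b. P a b \<or> Q a b) xs = (badw P xs \<or> badw Q xs)"
  by (induction xs) (auto simp: badw_cons)

fun isR :: "'a + 'b \<Rightarrow> bool" where
  "isR (Inl _) = False" | "isR (Inr _) = True"

definition Fc :: "'a + 'b \<Rightarrow> ('a + 'b) list \<Rightarrow> ('a + 'b) list" where
  "Fc x w = (case w of [] \<Rightarrow> [x] | y # zs \<Rightarrow> if x = y \<and> isR x then w else x # w)"

primrec col :: "('a + 'b) list \<Rightarrow> ('a + 'b) list" where
  "col [] = []"
| "col (x # xs) = Fc x (col xs)"

definition EQ :: "'a + 'b \<Rightarrow> 'a + 'b \<Rightarrow> bool" where "EQ a b = (a = b \<and> isR a)"

lemma Fc_ne: "Fc x w \<noteq> []" and Fc_hd: "hd (Fc x w) = x"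
  by (cases w; simp add: Fc_def)+

lemma Fc_Fc: "isR x \<Longrightarrow> Fc x (Fc x w) = Fc x w"
  by (cases w) (auto simp: Fc_def)

lemma col_nil: "col xs = [] \<longleftrightarrow> xs = []"
  by (cases xs) (auto simp: Fc_ne)

lemma col_hd: "xs \<noteq> [] \<Longrightarrow> hd (col xs) = hd xs"
  by (cases xs) (auto simp: Fc_hd)

lemma noadj_col: "\<not> badw EQ (col xs)"
proof (induction xs)
  case Nil then show ?case by simp
next
  case (Cons x xs)
  show ?case
  proof (cases "col xs")
    case Nil then show ?thesis by (simp add: Fc_def)
  next
    case (Cons y zs)
    then show ?thesis using Cons.IH by (auto simp: Fc_def badw_cons EQ_def)
  qed
qed

lemma col_id: "\<not> badw EQ xs \<Longrightarrow> col xs = xs"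
proof (induction xs)
  case Nil then show ?case by simp
next
  case (Cons x xs)
  then have "\<not> badw EQ xs" by (simp add: badw_cons)
  then have "col xs = xs" using Cons.IH by simp
  then show ?case using Cons.prems by (cases xs) (auto simp: Fc_def badw_cons EQ_def)
qed

lemma col_idem: "col (col xs) = col xs"
  using col_id noadj_col by blast

lemma col_app_r: "col (xs @ ys) = col (xs @ col ys)"
  by (induction xs) (simp_all add: col_idem)

lemma col_Fc_app: "col (Fc x c @ ys) = Fc x (col (c @ ys))"
proof (cases c)
  case Nil then show ?thesis by (simp add: Fc_def)
next
  case (Cons y zs)
  show ?thesis
  proof (cases "x = y \<and> isR x")
    case True
    then have xy: "x = y" and ix: "isR x" by auto
    then have iy: "isR y" by simp
    have e: "Fc x c = c" using Cons xy iy by (simp add: Fc_def)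
    have "col (c @ ys) = Fc y (col (zs @ ys))" using Cons by simp
    then show ?thesis using e xy iy Fc_Fc[of y "col (zs @ ys)"] by simp
  next
    case False
    then have "Fc x c = x # c" using Cons by (simp add: Fc_def)
    then show ?thesis by simp
  qed
qed

lemma col_app_l: "col (col xs @ ys) = col (xs @ ys)"
  by (induction xs) (simp_all add: col_Fc_app)

lemma badw_col:
  assumes "\<And>a b. P a b \<Longrightarrow> \<not> isR a \<and> \<not> isR b"
  shows "badw P (col ws) = badw P ws"
proof (induction ws)
  case Nil then show ?case by simp
next
  case (Cons x ws)
  show ?case
  proof (cases "col ws")
    case Nil
    then have "ws = []" using col_nil by blast
    then show ?thesis by (simp add: Fc_def)
  next
    case (Cons y zs)
    then have ne: "ws \<noteq> []" and hd: "hd ws = y" using col_nil col_hd[of ws] by fastforce+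
    show ?thesis
    proof (cases "x = y \<and> isR x")
      case True
      then show ?thesis using Cons Cons.IH ne hd assms[of x] by (auto simp: Fc_def badw_cons)
    next
      case False
      then show ?thesis using Cons Cons.IH ne hd by (auto simp: Fc_def badw_cons)
    qed
  qed
qed

lemma set_Fc: "set (Fc x w) \<subseteq> insert x (set w)"
  by (cases w) (auto simp: Fc_def)

lemma set_col: "set (col xs) \<subseteq> set xs"
  by (induction xs) (use set_Fc in fastforce)+

lemma vp_col:
  assumes Q: "quiv V A s t" and loops: "\<And>a. isR a \<Longrightarrow> s a = t a"
  shows "valid_path V A s t (u, xs, w) \<Longrightarrow> valid_path V A s t (u, col xs, w)"
proof (induction xs arbitrary: w)
  case Nil then show ?case by simp
next
  case (Cons x ws e)
  then have h: "x \<in> A" "t x = e" "e \<in> V" "valid_path V A s t (u, ws, s x)" by (auto simp: quiv.vp_cons[OF Q])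
  then have IH: "valid_path V A s t (u, col ws, s x)" using Cons.IH by blast
  show ?case
  proof (cases "col ws")
    case Nil
    then show ?thesis using IH h by (simp add: Fc_def quiv.vp_cons[OF Q])
  next
    case (Cons y zs)
    show ?thesis
    proof (cases "x = y \<and> isR x")
      case True
      then have "s x = e" using loops h by auto
      moreover have "Fc x (col ws) = col ws"
      proof -
        from True have xy: "x = y" and ix: "isR x" by auto
        then have iy: "isR y" by simp
        show ?thesis using Cons xy iy by (simp add: Fc_def)
      qed
      ultimately show ?thesis using IH by simp
    next
      case False
      then have "Fc x (col ws) = x # col ws" using Cons by (simp add: Fc_def)
      then show ?thesis using IH h by (simp add: quiv.vp_cons[OF Q])
    qed
  qed
qed


context quiv begin

lemma pbasis_PA: "vp p \<Longrightarrow> (pbasis p :: _ \<Rightarrow> 'k::field) \<in> PA"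
  by (simp add: PA_iff spt_def pbasis_def)

lemma spt_pbasis: "finite (spt (pbasis p :: _ \<Rightarrow> 'k::field))"
proof -
  have "spt (pbasis p :: _ \<Rightarrow> 'k::field) = {p}" by (auto simp: spt_def pbasis_def)
  then show ?thesis by simp
qed

lemma bad_in_ideal:
  fixes J :: "(('v,'b) path \<Rightarrow> 'k::field) set"
  assumes J: "is_ideal V A s t J" and R: "\<And>r. r \<in> R \<Longrightarrow> vp r" and RJ: "pbasis ` R \<subseteq> J"
    and p: "vp (v, xs, w)" and bad: "badw (pairR R) xs"
  shows "pbasis (v, xs, w) \<in> J"
proof -
  obtain pre a b post where xs: "xs = pre @ a # b # post" and ab: "pairR R a b"
    using badw_split[OF bad] by blast
  obtain u w' where r: "(u,[a,b],w') \<in> R" using ab unfolding pairR_def by blast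
  have vr: "vp (u,[a,b],w')" using R[OF r] .
  then have "t a = w'" "t b = s a" "u = s b" by (auto simp: vp_cons vp_nil)
  then have r': "(s b, [a,b], t a) \<in> R" using r by simp
  obtain m where m: "vp (m, pre, w)" "vp (v, a # b # post, m)"
    using vp_split[of v pre "a # b # post" w] p xs by auto
  then have "t a = m" "vp (v, post, s b)" by (auto simp: vp_cons)
  then have P1: "vp (t a, pre, w)" and P2: "vp (v, post, s b)" using m by auto
  have g: "pbasis (s b, [a,b], t a) \<in> J" using RJ r' by blast
  have "amul (pbasis (t a, pre, w)) (pbasis (s b, [a,b], t a)) = (pbasis (s b, pre @ [a,b], w) :: _ \<Rightarrow> 'k)"
    by (subst amul_basis) (auto simp: pcomp_def pstart_def pend_def parrs_def)
  moreover have "amul (pbasis (s b, pre @ [a,b], w)) (pbasis (v, post, s b)) = (pbasis (v, xs, w) :: _ \<Rightarrow> 'k)"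
    by (subst amul_basis) (auto simp: pcomp_def pstart_def pend_def parrs_def xs)
  moreover have "amul (pbasis (t a, pre, w)) (pbasis (s b, [a,b], t a)) \<in> J"
    using J g pbasis_PA[OF P1] unfolding is_ideal_def by blast
  ultimately have h1: "pbasis (s b, pre @ [a,b], w) \<in> J" by simp
  have "amul (pbasis (s b, pre @ [a,b], w)) (pbasis (v, post, s b)) \<in> J"
    using J h1 pbasis_PA[OF P2] unfolding is_ideal_def by blast
  moreover note \<open>amul (pbasis (s b, pre @ [a,b], w)) (pbasis (v, post, s b)) = (pbasis (v, xs, w) :: _ \<Rightarrow> 'k)\<close>
  ultimately show ?thesis by simp
qed

lemma Rd_fix:
  assumes "finite (spt g)" "\<And>r. r \<in> spt g \<Longrightarrow> red r = Some r"
  shows "Rd red g = g"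
proof
  fix r
  have "Rd red g r = (\<Sum>p\<in>{p\<in>spt g. red p = Some r}. g p)" by (rule Rd_alt) (use assms in auto)
  also have "{p\<in>spt g. red p = Some r} = {p\<in>spt g. p = r}" using assms(2) by auto
  also have "(\<Sum>p\<in>{p\<in>spt g. p = r}. g p) = g r"
  proof (cases "r \<in> spt g")
    case True
    then have "{p\<in>spt g. p = r} = {r}" by auto
    then show ?thesis by simp
  next
    case False
    then have "{p\<in>spt g. p = r} = {}" by auto
    then show ?thesis using False by (simp add: spt_def)
  qed
  finally show "Rd red g r = g r" .
qed

lemma Rd_lin:
  assumes "finite T" "\<And>g. g \<in> T \<Longrightarrow> finite (spt g)"
  shows "Rd red (\<lambda>r. \<Sum>g\<in>T. c g * g r) = (\<lambda>r. \<Sum>g\<in>T. c g * Rd red g r)"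
proof
  fix r
  let ?F = "\<Union>(spt ` T)"
  have fF: "finite ?F" using assms by blast
  have "spt (\<lambda>r. \<Sum>g\<in>T. c g * g r) \<subseteq> ?F"
  proof
    fix p assume "p \<in> spt (\<lambda>r. \<Sum>g\<in>T. c g * g r)"
    then have "(\<Sum>g\<in>T. c g * g p) \<noteq> 0" by (simp add: spt_def)
    then obtain g where "g \<in> T" "c g * g p \<noteq> 0" by (rule sum.not_neutral_contains_not_neutral)
    then show "p \<in> ?F" by (auto simp: spt_def)
  qed
  then have "Rd red (\<lambda>r. \<Sum>g\<in>T. c g * g r) r = (\<Sum>p\<in>{p\<in>?F. red p = Some r}. \<Sum>g\<in>T. c g * g p)"
    by (intro Rd_alt fF)
  also have "\<dots> = (\<Sum>g\<in>T. \<Sum>p\<in>{p\<in>?F. red p = Some r}. c g * g p)"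
    by (rule sum.swap)
  also have "\<dots> = (\<Sum>g\<in>T. c g * (\<Sum>p\<in>{p\<in>?F. red p = Some r}. g p))"
    by (simp add: sum_distrib_left)
  also have "\<dots> = (\<Sum>g\<in>T. c g * Rd red g r)"
  proof (rule sum.cong[OF refl])
    fix g assume "g \<in> T"
    then have "Rd red g r = (\<Sum>p\<in>{p\<in>?F. red p = Some r}. g p)" by (intro Rd_alt fF) auto
    then show "c g * (\<Sum>p\<in>{p\<in>?F. red p = Some r}. g p) = c g * Rd red g r" by simp
  qed
  finally show "Rd red (\<lambda>r. \<Sum>g\<in>T. c g * g r) r = (\<Sum>g\<in>T. c g * Rd red g r)" .
qed

lemma lin_span_Rd:
  assumes "z \<in> lin_span S" "\<And>g. g \<in> S \<Longrightarrow> finite (spt g)"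
  shows "finite (spt z) \<and> Rd red z \<in> lin_span (Rd red ` S)"
proof -
  obtain T c where T: "finite T" "T \<subseteq> S" "z = (\<lambda>r. \<Sum>g\<in>T. c g * g r)"
    using assms(1) unfolding lin_span_def by blast
  have fT: "\<And>g. g \<in> T \<Longrightarrow> finite (spt g)" using T assms(2) by blast
  have "spt z \<subseteq> \<Union>(spt ` T)"
  proof
    fix p assume "p \<in> spt z"
    then have "(\<Sum>g\<in>T. c g * g p) \<noteq> 0" using T by (simp add: spt_def)
    then obtain g where "g \<in> T" "c g * g p \<noteq> 0" by (rule sum.not_neutral_contains_not_neutral)
    then show "p \<in> \<Union>(spt ` T)" by (auto simp: spt_def)
  qed
  then have fz: "finite (spt z)" using T fT by (meson finite_UN_I finite_subset)
  let ?c' = "\<lambda>h. \<Sum>g\<in>{g\<in>T. Rd red g = h}. c g"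
  have "Rd red z = (\<lambda>r. \<Sum>g\<in>T. c g * Rd red g r)" using Rd_lin[OF T(1) fT] T(3) by simp
  also have "\<dots> = (\<lambda>r. \<Sum>h\<in>Rd red ` T. ?c' h * h r)"
  proof
    fix r
    have "(\<Sum>g\<in>T. c g * Rd red g r) = (\<Sum>h\<in>Rd red ` T. \<Sum>g\<in>{g\<in>T. Rd red g = h}. c g * Rd red g r)"
      by (rule sum.group[symmetric]) (use T in auto)
    also have "\<dots> = (\<Sum>h\<in>Rd red ` T. ?c' h * h r)"
    proof (rule sum.cong[OF refl])
      fix h assume "h \<in> Rd red ` T"
      have "(\<Sum>g\<in>{g\<in>T. Rd red g = h}. c g * Rd red g r) = (\<Sum>g\<in>{g\<in>T. Rd red g = h}. c g * h r)"
        by (rule sum.cong) auto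
      then show "(\<Sum>g\<in>{g\<in>T. Rd red g = h}. c g * Rd red g r) = ?c' h * h r"
        by (simp add: sum_distrib_right)
    qed
    finally show "(\<Sum>g\<in>T. c g * Rd red g r) = (\<Sum>h\<in>Rd red ` T. ?c' h * h r)" .
  qed
  finally have "Rd red z = (\<lambda>r. \<Sum>h\<in>Rd red ` T. ?c' h * h r)" .
  moreover have "finite (Rd red ` T)" "Rd red ` T \<subseteq> Rd red ` S" using T by auto
  ultimately have "Rd red z \<in> lin_span (Rd red ` S)" unfolding lin_span_def
    by (intro CollectI exI[of _ "Rd red ` T"] exI[of _ ?c']) simp
  then show ?thesis using fz by blast
qed

lemma findim_transfer:
  fixes J1 J2 :: "(('v,'b) path \<Rightarrow> 'k::field) set"
  assumes J1: "is_ideal V A s t J1"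
    and M1: "\<And>x. x \<in> (PA :: (_ \<Rightarrow> 'k) set) \<Longrightarrow> (x \<in> J1 \<longleftrightarrow> Rd r1 x = vzero) \<and> Rd r1 x \<in> PA"
    and M2: "\<And>x. x \<in> (PA :: (_ \<Rightarrow> 'k) set) \<Longrightarrow> vsub x (Rd r2 x) \<in> J2 \<and> Rd r2 x \<in> PA"
    and X: "\<And>x. x \<in> (PA :: (_ \<Rightarrow> 'k) set) \<Longrightarrow> Rd r1 (Rd r2 x) = Rd r2 x"
    and F: "fin_dim_quot V A s t J1"
  shows "fin_dim_quot V A s t J2"
proof -
  obtain S where S: "finite S" "S \<subseteq> PA" "\<forall>x\<in>PA. \<exists>y\<in>lin_span S. vsub x y \<in> J1"
    using F unfolding fin_dim_quot_def by blast
  have fS: "\<And>g. g \<in> S \<Longrightarrow> finite (spt g)" using S(2) by (auto simp: PA_iff)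
  have "finite (Rd r1 ` S)" "Rd r1 ` S \<subseteq> PA" using S M1 by auto
  moreover have "\<forall>y\<in>PA. \<exists>z\<in>lin_span (Rd r1 ` S). vsub y z \<in> J2"
  proof
    fix y assume y: "y \<in> (PA :: (_ \<Rightarrow> 'k) set)"
    let ?x = "Rd r2 y"
    have x: "?x \<in> PA" "vsub y ?x \<in> J2" using M2[OF y] by auto
    obtain z where z: "z \<in> lin_span S" "vsub ?x z \<in> J1" using S(3) x(1) by blast
    have zz: "finite (spt z)" "Rd r1 z \<in> lin_span (Rd r1 ` S)" using lin_span_Rd[OF z(1) fS] by auto
    have fx: "finite (spt ?x)" using x by (simp add: PA_iff)
    have "vsub ?x z \<in> PA" using J1 z(2) unfolding is_ideal_def by blast
    then have "Rd r1 (vsub ?x z) = vzero" using M1 z(2) by blast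
    then have "vsub (Rd r1 ?x) (Rd r1 z) = vzero" using Rd_vsub[OF fx zz(1)] by simp
    then have "Rd r1 z = Rd r1 ?x" by (simp add: vsub_def vzero_def fun_eq_iff)
    also have "\<dots> = ?x" using X[OF y] .
    finally have "?x \<in> lin_span (Rd r1 ` S)" using zz(2) by simp
    then show "\<exists>z\<in>lin_span (Rd r1 ` S). vsub y z \<in> J2" using x(2) by blast
  qed
  ultimately show ?thesis unfolding fin_dim_quot_def by blast
qed

end



definition red_sp :: "('v,'b) path set \<Rightarrow> ('v,'b) path \<Rightarrow> ('v,'b) path option" where
  "red_sp R p = (if badw (pairR R) (parrs p) then None else Some p)"

definition red_sg :: "('v,'a+'c) path set \<Rightarrow> ('v,'a+'c) path \<Rightarrow> ('v,'a+'c) path option" where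
  "red_sg R p = (if badw (pairR R) (col (parrs p)) then None else Some (pstart p, col (parrs p), pend p))"

lemma parrs_pcomp: "parrs (pcomp p q) = parrs p @ parrs q"
  by (simp add: pcomp_def parrs_def)
lemma pstart_pcomp: "pstart (pcomp p q) = pstart q"
  by (simp add: pcomp_def pstart_def)
lemma pend_pcomp: "pend (pcomp p q) = pend p"
  by (simp add: pcomp_def pend_def)
lemma path_eq: "p = (pstart p, parrs p, pend p)"
  by (simp add: pstart_def parrs_def pend_def)
lemma path_sel[simp]: "pstart (u, xs, w) = u" "parrs (u, xs, w) = xs" "pend (u, xs, w) = w"
  by (simp_all add: pstart_def parrs_def pend_def)

lemma red_sp_C1: "red_sp R q = Some q' \<Longrightarrow> pstart q' = pstart q \<and> pend q' = pend q"
  by (auto simp: red_sp_def split: if_splits)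

lemma red_sp_C2: "red_sp R (pcomp p q) = (case red_sp R q of None \<Rightarrow> None | Some q' \<Rightarrow> red_sp R (pcomp p q'))"
proof (cases "badw (pairR R) (parrs q)")
  case True
  then have "badw (pairR R) (parrs (pcomp p q))" by (simp add: parrs_pcomp badw_app1)
  then show ?thesis using True by (simp add: red_sp_def)
next
  case False
  then show ?thesis by (simp add: red_sp_def)
qed

lemma red_sp_C3: "red_sp R (pcomp p q) = (case red_sp R p of None \<Rightarrow> None | Some p' \<Rightarrow> red_sp R (pcomp p' q))"
proof (cases "badw (pairR R) (parrs p)")
  case True
  then have "badw (pairR R) (parrs (pcomp p q))" by (simp add: parrs_pcomp badw_app2)
  then show ?thesis using True by (simp add: red_sp_def)
next
  case False
  then show ?thesis by (simp add: red_sp_def)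
qed

lemma red_sg_C1: "red_sg R q = Some q' \<Longrightarrow> pstart q' = pstart q \<and> pend q' = pend q"
  by (auto simp: red_sg_def split: if_splits)

lemma red_sg_C2:
  assumes PL: "\<And>a b. pairR R a b \<Longrightarrow> \<not> isR a \<and> \<not> isR b"
  shows "red_sg R (pcomp p q) = (case red_sg R q of None \<Rightarrow> None | Some q' \<Rightarrow> red_sg R (pcomp p q'))"
proof (cases "badw (pairR R) (col (parrs q))")
  case True
  then have "badw (pairR R) (parrs q)" using badw_col[OF PL] by blast
  then have "badw (pairR R) (parrs p @ parrs q)" by (rule badw_app1)
  then have "badw (pairR R) (col (parrs (pcomp p q)))" using badw_col[OF PL] by (simp add: parrs_pcomp)
  then show ?thesis using True by (simp add: red_sg_def)
next
  case False
  have "col (parrs p @ col (parrs q)) = col (parrs p @ parrs q)" by (rule col_app_r[symmetric])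
  then show ?thesis using False
    by (simp add: red_sg_def parrs_pcomp pstart_pcomp pend_pcomp)
qed

lemma red_sg_C3:
  assumes PL: "\<And>a b. pairR R a b \<Longrightarrow> \<not> isR a \<and> \<not> isR b"
  shows "red_sg R (pcomp p q) = (case red_sg R p of None \<Rightarrow> None | Some p' \<Rightarrow> red_sg R (pcomp p' q))"
proof (cases "badw (pairR R) (col (parrs p))")
  case True
  then have "badw (pairR R) (parrs p)" using badw_col[OF PL] by blast
  then have "badw (pairR R) (parrs p @ parrs q)" by (rule badw_app2)
  then have "badw (pairR R) (col (parrs (pcomp p q)))" using badw_col[OF PL] by (simp add: parrs_pcomp)
  then show ?thesis using True by (simp add: red_sg_def)
next
  case False
  have "col (col (parrs p) @ parrs q) = col (parrs p @ parrs q)" by (rule col_app_l)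
  then show ?thesis using False
    by (simp add: red_sg_def parrs_pcomp pstart_pcomp pend_pcomp)
qed

locale sgq =
  fixes V :: "'v set" and Q1 :: "'a set" and s t :: "'a \<Rightarrow> 'v" and Sp :: "'v set" and I :: "('v,'a) path set"
  assumes SG: "skew_gentle V Q1 s t Sp I"
begin

lemma quiv_sp: "quiv V (sp_arrows Q1 Sp) (sp_src s) (sp_tgt t)"
proof
  fix a assume "a \<in> sp_arrows Q1 Sp"
  then show "sp_src s a \<in> V \<and> sp_tgt t a \<in> V"
    using SG unfolding sp_arrows_def skew_gentle_def by auto
qed

lemma quiv_Q: "quiv V Q1 s t"
  by standard (use SG in \<open>auto simp: skew_gentle_def\<close>)

end

sublocale sgq \<subseteq> Q: quiv V "sp_arrows Q1 Sp" "sp_src s" "sp_tgt t"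
  by (rule quiv_sp)

context sgq begin

abbreviation "vq \<equiv> valid_path V (sp_arrows Q1 Sp) (sp_src s) (sp_tgt t)"

lemma lift_valid_aux: "valid_path V Q1 s t (u, xs, w) \<Longrightarrow> vq (u, map Inl xs, w)"
proof (induction xs arbitrary: w)
  case Nil then show ?case by (auto simp: vp_nil)
next
  case (Cons x xs)
  have "Inl x \<in> sp_arrows Q1 Sp \<longleftrightarrow> x \<in> Q1" by (auto simp: sp_arrows_def)
  then show ?case using Cons
    by (simp add: quiv.vp_cons[OF quiv_Q] Q.vp_cons)
qed

lemma lift_valid: "p \<in> I \<Longrightarrow> vq (lift_path p)"
proof -
  assume "p \<in> I"
  then have "valid_path V Q1 s t (pstart p, parrs p, pend p)" using SG path_eq[of p]
    by (auto simp: skew_gentle_def)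
  then show ?thesis unfolding lift_path_def by (rule lift_valid_aux)
qed

lemma eps_valid: "i \<in> Sp \<Longrightarrow> vq (eps i)" and eps_sq_valid: "i \<in> Sp \<Longrightarrow> vq (eps_sq i)"
proof -
  assume i: "i \<in> Sp"
  then have "i \<in> V" "Inr i \<in> sp_arrows Q1 Sp" using SG by (auto simp: sp_arrows_def skew_gentle_def)
  then show "vq (eps i)" "vq (eps_sq i)" by (simp_all add: eps_def eps_sq_def Q.vp_cons vp_nil)
qed

lemma Isp_valid: "r \<in> I_sp I Sp \<Longrightarrow> vq r"
  unfolding I_sp_def using lift_valid eps_sq_valid by auto

lemma len2: "r \<in> I_sp I Sp \<Longrightarrow> \<exists>a b. parrs r = [a,b]"
proof -
  assume r: "r \<in> I_sp I Sp"
  have "length (parrs r) = 2" using SG r unfolding skew_gentle_def gentle_pair_def by blast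
  then show ?thesis by (auto simp: length_Suc_conv numeral_2_eq_2)
qed

lemma PL: "pairR (lift_path ` I) a b \<Longrightarrow> \<not> isR a \<and> \<not> isR b"
proof -
  assume "pairR (lift_path ` I) a b"
  then obtain u w p where "(u,[a,b],w) = lift_path p" unfolding pairR_def by blast
  then have "[a,b] = map Inl (parrs p)" by (simp add: lift_path_def)
  then show ?thesis by (cases "parrs p") auto
qed

lemma Psp: "pairR (I_sp I Sp) a b = (pairR (lift_path ` I) a b \<or> pairR (eps_sq ` Sp) a b)"
  unfolding pairR_def I_sp_def by blast

lemma PE: "pairR (eps_sq ` Sp) a b \<Longrightarrow> EQ a b"
  unfolding pairR_def eps_sq_def EQ_def by auto

lemma PE2: "i \<in> Sp \<Longrightarrow> pairR (I_sp I Sp) (Inr i) (Inr i)"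
  unfolding pairR_def I_sp_def eps_sq_def by blast

lemma loops: "isR a \<Longrightarrow> sp_src s a = sp_tgt t a"
  by (cases a) auto

end



context sgq begin

abbreviation "PAq \<equiv> path_alg V (sp_arrows Q1 Sp) (sp_src s) (sp_tgt t)"
abbreviation "Jsp \<equiv> gen_ideal V (sp_arrows Q1 Sp) (sp_src s) (sp_tgt t) (Isp_gens I Sp)"
abbreviation "Jsg \<equiv> gen_ideal V (sp_arrows Q1 Sp) (sp_src s) (sp_tgt t) (Isg_gens I Sp)"
abbreviation "RL \<equiv> lift_path ` I"
abbreviation "rsp \<equiv> red_sp (I_sp I Sp)"
abbreviation "rsg \<equiv> red_sg RL"

lemma Xsp_PA: "(Isp_gens I Sp :: (_ \<Rightarrow> 'k::field) set) \<subseteq> PAq"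
  unfolding Isp_gens_def using Isp_valid Q.pbasis_PA by blast

lemma lift_in_Isp: "r \<in> RL \<Longrightarrow> r \<in> I_sp I Sp"
  unfolding I_sp_def by blast

lemma Xsg_PA: "(Isg_gens I Sp :: (_ \<Rightarrow> 'k::field) set) \<subseteq> PAq"
proof
  fix g :: "_ \<Rightarrow> 'k" assume "g \<in> Isg_gens I Sp"
  then consider (a) r where "r \<in> RL" "g = pbasis r" | (b) i where "i \<in> Sp" "g = vsub (pbasis (eps_sq i)) (pbasis (eps i))"
    unfolding Isg_gens_def by blast
  then show "g \<in> PAq"
  proof cases
    case a then show ?thesis using Isp_valid[OF lift_in_Isp] Q.pbasis_PA by blast
  next
    case b then show ?thesis using Q.PA_vsub Q.pbasis_PA eps_valid eps_sq_valid by blast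
  qed
qed

lemma Jsp_ideal: "is_ideal V (sp_arrows Q1 Sp) (sp_src s) (sp_tgt t) (Jsp :: (_ \<Rightarrow> 'k::field) set)"
  by (rule Q.gen_ideal_is[OF Xsp_PA])

lemma Jsg_ideal: "is_ideal V (sp_arrows Q1 Sp) (sp_src s) (sp_tgt t) (Jsg :: (_ \<Rightarrow> 'k::field) set)"
  by (rule Q.gen_ideal_is[OF Xsg_PA])

lemma P3_sp: "vq p \<Longrightarrow> (case rsp p of None \<Rightarrow> (pbasis p :: _ \<Rightarrow> 'k::field) \<in> Jsp | Some q \<Rightarrow> vsub (pbasis p) (pbasis q :: _ \<Rightarrow> 'k) \<in> Jsp)"
proof -
  assume p: "vq p"
  show ?thesis
  proof (cases "badw (pairR (I_sp I Sp)) (parrs p)")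
    case True
    have RJ: "pbasis ` (I_sp I Sp) \<subseteq> (Jsp :: (_ \<Rightarrow> 'k::field) set)"
      using Q.gen_ideal_sup[of "Isp_gens I Sp"] unfolding Isp_gens_def by blast
    have "(pbasis (pstart p, parrs p, pend p) :: _ \<Rightarrow> 'k) \<in> Jsp"
      by (rule Q.bad_in_ideal[OF Jsp_ideal Isp_valid RJ]) (use p path_eq[of p] True in auto)
    then show ?thesis using True path_eq[of p] by (simp add: red_sp_def)
  next
    case False
    have "vsub (pbasis p) (pbasis p) = (vzero :: _ \<Rightarrow> 'k)" by (simp add: vsub_def vzero_def fun_eq_iff)
    moreover have "(vzero :: _ \<Rightarrow> 'k) \<in> Jsp" using Jsp_ideal unfolding is_ideal_def by blast
    ultimately show ?thesis using False by (simp add: red_sp_def)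
  qed
qed

lemma P4_sp: "g \<in> (Isp_gens I Sp :: (_ \<Rightarrow> 'k::field) set) \<Longrightarrow> Rd rsp g = vzero"
proof -
  assume "g \<in> Isp_gens I Sp"
  then obtain r where r: "r \<in> I_sp I Sp" "g = pbasis r" unfolding Isp_gens_def by blast
  obtain a b where ab: "parrs r = [a,b]" using len2[OF r(1)] by blast
  have "pairR (I_sp I Sp) a b" unfolding pairR_def using r(1) path_eq[of r] ab by metis
  then have "rsp r = None" using ab by (simp add: red_sp_def)
  then show ?thesis using r(2) Rd_basis[of rsp r] by simp
qed

lemma col_ideal:
  "vq (v, xs, w) \<Longrightarrow> vsub (pbasis (v, xs, w)) (pbasis (v, col xs, w)) \<in> (Jsg :: (_ \<Rightarrow> 'k::field) set)"
proof (induction xs arbitrary: w)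
  case Nil
  have "(vzero :: _ \<Rightarrow> 'k) \<in> Jsg" using Jsg_ideal unfolding is_ideal_def by blast
  then show ?case by (simp add: vsub_def vzero_def)
next
  case (Cons x ws e)
  have J: "is_ideal V (sp_arrows Q1 Sp) (sp_src s) (sp_tgt t) (Jsg :: (_ \<Rightarrow> 'k::field) set)" by (rule Jsg_ideal)
  from Cons.prems have h: "x \<in> sp_arrows Q1 Sp" "sp_tgt t x = e" "e \<in> V" "vq (v, ws, sp_src s x)"
    by (auto simp: Q.vp_cons)
  have IH: "vsub (pbasis (v, ws, sp_src s x)) (pbasis (v, col ws, sp_src s x)) \<in> (Jsg :: (_ \<Rightarrow> 'k::field) set)"
    using Cons.IH h(4) by blast
  have vcol: "vq (v, col ws, sp_src s x)" using vp_col[OF quiv_sp loops h(4)] .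
  have sxV: "sp_src s x \<in> V" using h(1) Q.ends by blast
  have vx: "vq (sp_src s x, [x], sp_tgt t x)" using h sxV by (simp add: Q.vp_cons vp_nil)
  let ?bx = "pbasis (sp_src s x, [x], sp_tgt t x) :: _ \<Rightarrow> 'k"
  have "amul ?bx (vsub (pbasis (v, ws, sp_src s x)) (pbasis (v, col ws, sp_src s x)))
        = vsub (amul ?bx (pbasis (v, ws, sp_src s x))) (amul ?bx (pbasis (v, col ws, sp_src s x)))"
    by (rule Q.amul_vsub_right) (simp_all add: Q.spt_pbasis)
  also have "\<dots> = vsub (pbasis (v, x # ws, e)) (pbasis (v, x # col ws, e))"
    using h(2) by (simp add: Q.amul_basis pcomp_def)
  finally have D1: "vsub (pbasis (v, x # ws, e)) (pbasis (v, x # col ws, e)) \<in> (Jsg :: (_ \<Rightarrow> 'k::field) set)"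
    using J IH Q.pbasis_PA[OF vx] unfolding is_ideal_def by metis
  have D2: "vsub (pbasis (v, x # col ws, e)) (pbasis (v, Fc x (col ws), e)) \<in> (Jsg :: (_ \<Rightarrow> 'k::field) set)"
  proof (cases "\<exists>zs. col ws = x # zs \<and> isR x")
    case True
    then obtain zs i where zs: "col ws = x # zs" and xi: "x = Inr i" by (cases x) auto
    have iSp: "i \<in> Sp" using h(1) xi by (auto simp: sp_arrows_def)
    have eq: "Fc x (col ws) = col ws" using zs xi by (simp add: Fc_def)
    have ei: "e = i" using h(2) xi by simp
    have vz: "vq (v, zs, i)" using vcol zs xi by (simp add: Q.vp_cons)
    let ?G = "vsub (pbasis (eps_sq i)) (pbasis (eps i)) :: _ \<Rightarrow> 'k"
    let ?Z = "pbasis (v, zs, i) :: _ \<Rightarrow> 'k"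
    have G: "?G \<in> Jsg" using Q.gen_ideal_sup[of "Isg_gens I Sp"] iSp unfolding Isg_gens_def by blast
    have "amul ?G ?Z = vsub (amul (pbasis (eps_sq i)) ?Z) (amul (pbasis (eps i)) ?Z)"
      by (rule Q.amul_vsub_left) (simp_all add: Q.spt_pbasis)
    also have "\<dots> = vsub (pbasis (v, x # x # zs, e)) (pbasis (v, x # zs, e))"
      using xi ei by (simp add: Q.amul_basis pcomp_def eps_def eps_sq_def)
    finally have "vsub (pbasis (v, x # x # zs, e)) (pbasis (v, x # zs, e)) \<in> (Jsg :: (_ \<Rightarrow> 'k::field) set)"
      using J G Q.pbasis_PA[OF vz] unfolding is_ideal_def by metis
    then show ?thesis using eq zs by simp
  next
    case False
    then have "Fc x (col ws) = x # col ws" by (cases "col ws") (auto simp: Fc_def)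
    moreover have "vsub (pbasis (v, x # col ws, e)) (pbasis (v, x # col ws, e)) = (vzero :: _ \<Rightarrow> 'k)"
      by (simp add: vsub_def vzero_def fun_eq_iff)
    moreover have "(vzero :: _ \<Rightarrow> 'k) \<in> Jsg" using J unfolding is_ideal_def by blast
    ultimately show ?thesis by simp
  qed
  have eq: "vsub (pbasis (v, x # ws, e) :: _ \<Rightarrow> 'k) (pbasis (v, col (x # ws), e))
      = vadd (vsub (pbasis (v, x # ws, e)) (pbasis (v, x # col ws, e))) (vsub (pbasis (v, x # col ws, e)) (pbasis (v, Fc x (col ws), e)))"
    by (simp add: vsub_def vadd_def fun_eq_iff)
  show ?case unfolding eq using D1 D2 J unfolding is_ideal_def by blast
qed

lemma P3_sg: "vq p \<Longrightarrow> (case rsg p of None \<Rightarrow> (pbasis p :: _ \<Rightarrow> 'k::field) \<in> Jsg | Some q \<Rightarrow> vsub (pbasis p) (pbasis q :: _ \<Rightarrow> 'k) \<in> Jsg)"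
proof -
  assume p: "vq p"
  show ?thesis
  proof (cases "badw (pairR RL) (col (parrs p))")
    case True
    then have bad: "badw (pairR RL) (parrs p)" using badw_col[OF PL] by blast
    have RJ: "pbasis ` RL \<subseteq> (Jsg :: (_ \<Rightarrow> 'k::field) set)"
      using Q.gen_ideal_sup[of "Isg_gens I Sp"] unfolding Isg_gens_def by blast
    have "(pbasis (pstart p, parrs p, pend p) :: _ \<Rightarrow> 'k) \<in> Jsg"
      by (rule Q.bad_in_ideal[OF Jsg_ideal _ RJ]) (use p path_eq[of p] bad Isp_valid lift_in_Isp in auto)
    then show ?thesis using True path_eq[of p] by (simp add: red_sg_def)
  next
    case False
    have "vsub (pbasis (pstart p, parrs p, pend p)) (pbasis (pstart p, col (parrs p), pend p)) \<in> (Jsg :: (_ \<Rightarrow> 'k::field) set)"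
      using col_ideal p path_eq[of p] by metis
    then show ?thesis using False path_eq[of p] by (simp add: red_sg_def)
  qed
qed

lemma col2: "\<not> isR a \<Longrightarrow> col [a, b] = [a, b]"
  by (simp add: Fc_def)

lemma P4_sg: "g \<in> (Isg_gens I Sp :: (_ \<Rightarrow> 'k::field) set) \<Longrightarrow> Rd rsg g = vzero"
proof -
  assume "g \<in> Isg_gens I Sp"
  then consider (a) r where "r \<in> RL" "g = pbasis r" | (b) i where "i \<in> Sp" "g = vsub (pbasis (eps_sq i)) (pbasis (eps i))"
    unfolding Isg_gens_def by blast
  then show ?thesis
  proof cases
    case a
    obtain x y where ab: "parrs r = [x,y]" using len2[OF lift_in_Isp[OF a(1)]] by blast
    have pr: "pairR RL x y" unfolding pairR_def using a(1) path_eq[of r] ab by metis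
    have "\<not> isR x" using PL[OF pr] by blast
    then have "col (parrs r) = [x,y]" using ab col2[of x y] by simp
    then have "rsg r = None" using pr by (simp add: red_sg_def)
    then show ?thesis using a(2) Rd_basis[of rsg r] by simp
  next
    case (b i)
    have e1: "rsg (eps_sq i) = Some (eps i)" by (simp add: red_sg_def eps_sq_def eps_def Fc_def)
    have e2: "rsg (eps i) = Some (eps i)" by (simp add: red_sg_def eps_def Fc_def)
    have "Rd rsg g = vsub (Rd rsg (pbasis (eps_sq i))) (Rd rsg (pbasis (eps i)) :: _ \<Rightarrow> 'k)"
      using b(2) Rd_vsub[OF Q.spt_pbasis Q.spt_pbasis] by simp
    also have "\<dots> = vzero" using e1 e2 by (simp add: Rd_basis vsub_def vzero_def fun_eq_iff)
    finally show ?thesis .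
  qed
qed

lemma RSP: "x \<in> (PAq :: (_ \<Rightarrow> 'k::field) set) \<Longrightarrow>
  (x \<in> Jsp \<longleftrightarrow> Rd rsp x = vzero) \<and> vsub x (Rd rsp x) \<in> Jsp \<and> Rd rsp x \<in> PAq"
  by (rule Q.reduction[OF Xsp_PA red_sp_C1 red_sp_C2 red_sp_C3 _ P3_sp P4_sp])
     (auto simp: red_sp_def split: if_splits)

lemma RSG: "x \<in> (PAq :: (_ \<Rightarrow> 'k::field) set) \<Longrightarrow>
  (x \<in> Jsg \<longleftrightarrow> Rd rsg x = vzero) \<and> vsub x (Rd rsg x) \<in> Jsg \<and> Rd rsg x \<in> PAq"
proof -
  assume x: "x \<in> (PAq :: (_ \<Rightarrow> 'k::field) set)"
  have P1: "vq q" if "vq p" "rsg p = Some q" for p q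
  proof -
    have "q = (pstart p, col (parrs p), pend p)" using that(2) by (simp add: red_sg_def split: if_splits)
    then show ?thesis using vp_col[OF quiv_sp loops, of "pstart p" "parrs p" "pend p"] that(1) path_eq[of p] by simp
  qed
  show ?thesis
    by (rule Q.reduction[OF Xsg_PA red_sg_C1 red_sg_C2[OF PL] red_sg_C3[OF PL] P1 P3_sg P4_sg x])
qed

lemma Psp_fun: "pairR (I_sp I Sp) = (\<lambda>a b. pairR RL a b \<or> pairR (eps_sq ` Sp) a b)"
  using Psp by (intro ext) blast

lemma X1: "x \<in> (PAq :: (_ \<Rightarrow> 'k::field) set) \<Longrightarrow> Rd rsp (Rd rsg x) = Rd rsg x"
proof -
  assume x: "x \<in> (PAq :: (_ \<Rightarrow> 'k::field) set)"
  have g: "Rd rsg x \<in> PAq" using RSG[OF x] by blast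
  show ?thesis
  proof (rule Q.Rd_fix)
    show "finite (spt (Rd rsg x))" using g by (simp add: Q.PA_iff)
  next
    fix r assume "r \<in> spt (Rd rsg x)"
    then obtain p where "rsg p = Some r" using Rd_spt[of rsg x] by blast
    then have r: "r = (pstart p, col (parrs p), pend p)" and nb: "\<not> badw (pairR RL) (col (parrs p))"
      by (auto simp: red_sg_def split: if_splits)
    have "\<not> badw (pairR (eps_sq ` Sp)) (col (parrs p))"
      using badw_mono[of UNIV "pairR (eps_sq ` Sp)" EQ] PE noadj_col by blast
    then have "\<not> badw (pairR (I_sp I Sp)) (col (parrs p))" using nb by (simp add: Psp_fun badw_or)
    then show "rsp r = Some r" using r by (simp add: red_sp_def)
  qed
qed

lemma X2: "x \<in> (PAq :: (_ \<Rightarrow> 'k::field) set) \<Longrightarrow> Rd rsg (Rd rsp x) = Rd rsp x"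
proof -
  assume x: "x \<in> (PAq :: (_ \<Rightarrow> 'k::field) set)"
  have g: "Rd rsp x \<in> PAq" using RSP[OF x] by blast
  show ?thesis
  proof (rule Q.Rd_fix)
    show "finite (spt (Rd rsp x))" using g by (simp add: Q.PA_iff)
  next
    fix r assume "r \<in> spt (Rd rsp x)"
    then obtain p where p: "p \<in> spt x" "rsp p = Some r" using Rd_spt[of rsp x] by blast
    then have rp: "r = p" and nb: "\<not> badw (pairR (I_sp I Sp)) (parrs p)"
      by (auto simp: red_sp_def split: if_splits)
    have vp: "vq p" using p(1) x by (simp add: Q.PA_iff)
    then have setA: "set (parrs p) \<subseteq> sp_arrows Q1 Sp"
      using path_eq[of p] unfolding valid_path_def by (auto split: prod.splits)
    have "\<not> badw EQ (parrs p)"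
    proof
      assume "badw EQ (parrs p)"
      moreover have "\<And>a b. a \<in> sp_arrows Q1 Sp \<Longrightarrow> b \<in> sp_arrows Q1 Sp \<Longrightarrow> EQ a b \<Longrightarrow> pairR (I_sp I Sp) a b"
      proof -
        fix a b assume "a \<in> sp_arrows Q1 Sp" "EQ a b"
        then obtain i where "a = Inr i" "b = Inr i" "i \<in> Sp"
          unfolding EQ_def sp_arrows_def by (cases a) auto
        then show "pairR (I_sp I Sp) a b" using PE2 by simp
      qed
      ultimately have "badw (pairR (I_sp I Sp)) (parrs p)" using badw_mono setA by blast
      then show False using nb by simp
    qed
    then have c: "col (parrs p) = parrs p" by (rule col_id)
    have "\<not> badw (pairR RL) (parrs p)" using nb by (simp add: Psp_fun badw_or)
    then show "rsg r = Some r" using rp c path_eq[of p] by (simp add: red_sg_def)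
  qed
qed

theorem main:
  "quot_iso V (sp_arrows Q1 Sp) (sp_src s) (sp_tgt t) (Jsg :: (_ \<Rightarrow> 'k::field) set) Jsp
   \<and> (fin_dim_quot V (sp_arrows Q1 Sp) (sp_src s) (sp_tgt t) (Jsg :: (_ \<Rightarrow> 'k) set)
      \<longleftrightarrow> fin_dim_quot V (sp_arrows Q1 Sp) (sp_src s) (sp_tgt t) (Jsp :: (_ \<Rightarrow> 'k) set))"
proof (intro conjI iffI)
  show "quot_iso V (sp_arrows Q1 Sp) (sp_src s) (sp_tgt t) (Jsg :: (_ \<Rightarrow> 'k::field) set) Jsp"
    unfolding quot_iso_def
  proof (intro exI[of _ "Rd rsg"] conjI ballI allI)
    fix x :: "_ \<Rightarrow> 'k" assume x: "x \<in> PAq"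
    show "Rd rsg x \<in> PAq" using RSG[OF x] by blast
    have "Rd rsg x \<in> Jsp \<longleftrightarrow> Rd rsp (Rd rsg x) = vzero" using RSP[of "Rd rsg x"] RSG[OF x] by blast
    also have "\<dots> \<longleftrightarrow> Rd rsg x = vzero" using X1[OF x] by simp
    also have "\<dots> \<longleftrightarrow> x \<in> Jsg" using RSG[OF x] by blast
    finally show "Rd rsg x \<in> Jsp \<longleftrightarrow> x \<in> Jsg" .
  next
    fix x y :: "_ \<Rightarrow> 'k" assume "x \<in> PAq" "y \<in> PAq"
    then show "Rd rsg (vadd x y) = vadd (Rd rsg x) (Rd rsg y)"
      by (intro Rd_vadd) (simp_all add: Q.PA_iff)
  next
    fix c :: 'k and x :: "_ \<Rightarrow> 'k" assume "x \<in> PAq"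
    then show "Rd rsg (vscale c x) = vscale c (Rd rsg x)"
      by (intro Rd_vscale) (simp add: Q.PA_iff)
  next
    fix y :: "_ \<Rightarrow> 'k" assume y: "y \<in> PAq"
    let ?x = "Rd rsp y"
    have xP: "?x \<in> PAq" and d: "vsub y ?x \<in> Jsp" using RSP[OF y] by auto
    have "vsub (Rd rsg ?x) y = vscale (-1) (vsub y ?x)"
      using X2[OF y] by (simp add: vsub_def vscale_def fun_eq_iff)
    also have "\<dots> \<in> Jsp" using d Jsp_ideal unfolding is_ideal_def by blast
    finally show "\<exists>x\<in>PAq. vsub (Rd rsg x) y \<in> Jsp" using xP by blast
  qed
next
  assume "fin_dim_quot V (sp_arrows Q1 Sp) (sp_src s) (sp_tgt t) (Jsg :: (_ \<Rightarrow> 'k) set)"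
  then show "fin_dim_quot V (sp_arrows Q1 Sp) (sp_src s) (sp_tgt t) (Jsp :: (_ \<Rightarrow> 'k) set)"
    by (rule Q.findim_transfer[OF Jsg_ideal _ _ X2, rotated -1]) (use RSG RSP in blast)+
next
  assume "fin_dim_quot V (sp_arrows Q1 Sp) (sp_src s) (sp_tgt t) (Jsp :: (_ \<Rightarrow> 'k) set)"
  then show "fin_dim_quot V (sp_arrows Q1 Sp) (sp_src s) (sp_tgt t) (Jsg :: (_ \<Rightarrow> 'k) set)"
    by (rule Q.findim_transfer[OF Jsp_ideal _ _ X1, rotated -1]) (use RSG RSP in blast)+
qed

end


theorem mainTheorem2:
  fixes V :: "'v set" and Q1 :: "'a set" and s t :: "'a \<Rightarrow> 'v"
    and Sp :: "'v set" and I :: "('v,'a) path set"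
  assumes "alg_closed TYPE('k::field)"
    and "skew_gentle V Q1 s t Sp I"
  shows "quot_iso V (sp_arrows Q1 Sp) (sp_src s) (sp_tgt t)
           (ideal_sg V Q1 s t Sp I :: (('v, 'a + 'v) path \<Rightarrow> 'k::field) set)
           (ideal_sp V Q1 s t Sp I)
       \<and> (fin_dim_quot V (sp_arrows Q1 Sp) (sp_src s) (sp_tgt t)
             (ideal_sg V Q1 s t Sp I :: (('v, 'a + 'v) path \<Rightarrow> 'k) set)
          \<longleftrightarrow> fin_dim_quot V (sp_arrows Q1 Sp) (sp_src s) (sp_tgt t)
             (ideal_sp V Q1 s t Sp I :: (('v, 'a + 'v) path \<Rightarrow> 'k) set))"
  proof -
  interpret sgq V Q1 s t Sp I by standard (rule assms(2))
  show ?thesis unfolding ideal_sg_def ideal_sp_def by (rule main)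
qed

end
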